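(* Let $G$ be a finite group and let $H$ be a non-trivial cyclic $2$-subgroup of $G$. Then $H$ is a perfect code of $G$ if and only if $H$ is not contained in any subgroup $K$ of $G$ such that $|K|/|H|=2$ and $K$ is either cyclic or generalized quaternion.
   Context: For a group $G$ with identity $e$ and an inverse-closed subset $S\subseteq G\setminus\{e\}$, the Cayley graph $\mathrm{Cay}(G,S)$ has vertex set $G$ and edges $\{g,sg\}$ for $s\in S$, $g\in G$. A perfect code in a graph is an independent set $C$ of vertices such that every vertex outside $C$ is adjacent to exactly one vertex of $C$. A subgroup $H$ of $G$ is a perfect code of $G$ if some Cayley graph of $G$ admits $H$ as a perfect code. *)

theory Defs
  imports "HOL-Algebra.Algebra"
begin

definition cayley_adj :: "('a, 'b) monoid_scheme \<Rightarrow> 'a set \<Rightarrow> 'a \<Rightarrow> 'a \<Rightarrow> bool" where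
  "cayley_adj G S g h \<longleftrightarrow> (\<exists>s\<in>S. h = s \<otimes>\<^bsub>G\<^esub> g)"

definition cayley_connection_set :: "('a, 'b) monoid_scheme \<Rightarrow> 'a set \<Rightarrow> bool" where
  "cayley_connection_set G S \<longleftrightarrow>
     S \<subseteq> carrier G - {\<one>\<^bsub>G\<^esub>} \<and> (\<forall>s\<in>S. inv\<^bsub>G\<^esub> s \<in> S)"

definition cayley_perfect_code :: "('a, 'b) monoid_scheme \<Rightarrow> 'a set \<Rightarrow> 'a set \<Rightarrow> bool" where
  "cayley_perfect_code G S C \<longleftrightarrow>
     C \<subseteq> carrier G \<and>
     (\<forall>c1\<in>C. \<forall>c2\<in>C. c1 \<noteq> c2 \<longrightarrow> \<not> cayley_adj G S c1 c2) \<and>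
     (\<forall>v\<in>carrier G - C. \<exists>!c. c \<in> C \<and> cayley_adj G S v c)"

definition subgroup_perfect_code :: "('a, 'b) monoid_scheme \<Rightarrow> 'a set \<Rightarrow> bool" where
  "subgroup_perfect_code G H \<longleftrightarrow>
     (\<exists>S. cayley_connection_set G S \<and> cayley_perfect_code G S H)"

text \<open>Generalized quaternion group Q_{2^n} (n \<ge> 3):
  order 2^n, generated by x, y with x^(2^(n-1)) = 1, y^2 = x^(2^(n-2)), y^-1 x y = x^-1.
  (A group of order 2^n satisfying these relations is isomorphic to Q_{2^n}.)\<close>
definition gen_quaternion_group :: "('a, 'b) monoid_scheme \<Rightarrow> bool" where
  "gen_quaternion_group Q \<longleftrightarrow> group Q \<and>
     (\<exists>n::nat. n \<ge> 3 \<and> finite (carrier Q) \<and> card (carrier Q) = 2 ^ n \<and>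
       (\<exists>x\<in>carrier Q. \<exists>y\<in>carrier Q.
          generate Q {x, y} = carrier Q \<and>
          x [^]\<^bsub>Q\<^esub> ((2::nat) ^ (n - 1)) = \<one>\<^bsub>Q\<^esub> \<and>
          y [^]\<^bsub>Q\<^esub> (2::nat) = x [^]\<^bsub>Q\<^esub> ((2::nat) ^ (n - 2)) \<and>
          inv\<^bsub>Q\<^esub> y \<otimes>\<^bsub>Q\<^esub> x \<otimes>\<^bsub>Q\<^esub> y = inv\<^bsub>Q\<^esub> x))"

end

theory Submission
  imports Defs "HOL-Computational_Algebra.Primes"
begin

context group begin

lemma my_c1 [simp]: "x \<in> carrier G \<Longrightarrow> y \<in> carrier G \<Longrightarrow> x \<otimes> (inv x \<otimes> y) = y"
  by (simp add: m_assoc[symmetric])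
lemma my_c2 [simp]: "x \<in> carrier G \<Longrightarrow> y \<in> carrier G \<Longrightarrow> inv x \<otimes> (x \<otimes> y) = y"
  by (simp add: m_assoc[symmetric])

lemma rc_mem:
  assumes "subgroup H G" "x \<in> carrier G"
  shows "z \<in> H #> x \<longleftrightarrow> z \<in> carrier G \<and> z \<otimes> inv x \<in> H"
proof
  assume "z \<in> H #> x"
  then obtain h where h: "h \<in> H" "z = h \<otimes> x" unfolding r_coset_def by blast
  have hc: "h \<in> carrier G" using subgroup.mem_carrier[OF assms(1) h(1)] .
  have e: "h \<otimes> x \<otimes> inv x = h" using hc assms(2) by (simp add: m_assoc)
  show "z \<in> carrier G \<and> z \<otimes> inv x \<in> H" unfolding h(2) e using h(1) hc assms(2) by simp
next
  assume a: "z \<in> carrier G \<and> z \<otimes> inv x \<in> H"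
  have A: "(z \<otimes> inv x) \<otimes> x \<in> H #> x"
    by (rule rcosI) (use a assms in \<open>auto dest: subgroup.subset\<close>)
  have B: "(z \<otimes> inv x) \<otimes> x = z" using a assms(2) by (simp add: m_assoc)
  show "z \<in> H #> x" using A unfolding B .
qed

lemma rc_eq:
  assumes "subgroup H G" "x \<in> carrier G" "y \<in> carrier G"
  shows "H #> x = H #> y \<longleftrightarrow> x \<otimes> inv y \<in> H"
proof
  assume "H #> x = H #> y"
  moreover have "x \<in> H #> x" using assms rc_mem[of H x x] subgroup.one_closed by fastforce
  ultimately show "x \<otimes> inv y \<in> H" using rc_mem[OF assms(1,3)] by auto
next
  assume a: "x \<otimes> inv y \<in> H"
  have "z \<in> H #> x \<longleftrightarrow> z \<in> H #> y" for z
  proof -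
    have e1: "z \<otimes> inv y = (z \<otimes> inv x) \<otimes> (x \<otimes> inv y)" if "z \<in> carrier G" using that assms by (simp add: m_assoc)
    have e2: "z \<otimes> inv x = (z \<otimes> inv y) \<otimes> inv (x \<otimes> inv y)" if "z \<in> carrier G" using that assms
      by (simp add: m_assoc inv_mult_group)
    show ?thesis
    proof (cases "z \<in> carrier G")
      case True
      have "z \<otimes> inv y \<in> H" if "z \<otimes> inv x \<in> H"
        unfolding e1[OF True] by (rule subgroup.m_closed[OF assms(1) that a])
      moreover have "z \<otimes> inv x \<in> H" if "z \<otimes> inv y \<in> H"
        unfolding e2[OF True] by (rule subgroup.m_closed[OF assms(1) that subgroup.m_inv_closed[OF assms(1) a]])
      ultimately show ?thesis unfolding rc_mem[OF assms(1,2)] rc_mem[OF assms(1,3)] using True by blast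
    qed (simp add: rc_mem[OF assms(1,2)] rc_mem[OF assms(1,3)])
  qed
  then show "H #> x = H #> y" by blast
qed

lemma rc_self: "subgroup H G \<Longrightarrow> x \<in> carrier G \<Longrightarrow> x \<in> H #> x"
  using rc_mem[of H x x] subgroup.one_closed by fastforce

lemma rc_same: "subgroup H G \<Longrightarrow> x \<in> carrier G \<Longrightarrow> z \<in> H #> x \<Longrightarrow> H #> z = H #> x"
  using rc_mem rc_eq by blast

lemma rc_card: "subgroup H G \<Longrightarrow> x \<in> carrier G \<Longrightarrow> card (H #> x) = card H"
proof -
  assume a: "subgroup H G" "x \<in> carrier G"
  have "H #> x = (\<lambda>h. h \<otimes> x) ` H" unfolding r_coset_def by auto
  moreover have "inj_on (\<lambda>h. h \<otimes> x) H"
  proof (rule inj_onI)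
    fix u v assume "u \<in> H" "v \<in> H" "u \<otimes> x = v \<otimes> x"
    then show "u = v" using a subgroup.mem_carrier[OF a(1)] by simp
  qed
  ultimately show ?thesis by (simp add: card_image)
qed

lemma rc_sub: "subgroup H G \<Longrightarrow> x \<in> carrier G \<Longrightarrow> H #> x \<subseteq> carrier G"
  using rc_mem by blast

end



definition dcos :: "('a, 'b) monoid_scheme \<Rightarrow> 'a set \<Rightarrow> 'a \<Rightarrow> 'a set" where
  "dcos G H g = {h1 \<otimes>\<^bsub>G\<^esub> g \<otimes>\<^bsub>G\<^esub> h2 | h1 h2. h1 \<in> H \<and> h2 \<in> H}"

locale hg = group G for G (structure) +
  fixes H assumes subH: "subgroup H G"
begin

lemma hc [simp]: "h \<in> H \<Longrightarrow> h \<in> carrier G"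
  using subgroup.mem_carrier[OF subH] .

lemma H1 [simp]: "\<one> \<in> H"
  using subgroup.one_closed[OF subH] .

lemma Hm [simp]: "a \<in> H \<Longrightarrow> b \<in> H \<Longrightarrow> a \<otimes> b \<in> H"
  using subgroup.m_closed[OF subH] .

lemma Hi [simp]: "a \<in> H \<Longrightarrow> inv a \<in> H"
  using subgroup.m_inv_closed[OF subH] .

lemma rmem: "x \<in> carrier G \<Longrightarrow> z \<in> H #> x \<longleftrightarrow> z \<in> carrier G \<and> z \<otimes> inv x \<in> H"
  using rc_mem[OF subH] .

lemma req: "x \<in> carrier G \<Longrightarrow> y \<in> carrier G \<Longrightarrow> H #> x = H #> y \<longleftrightarrow> x \<otimes> inv y \<in> H"
  using rc_eq[OF subH] .

lemma rself: "x \<in> carrier G \<Longrightarrow> x \<in> H #> x"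
  using rc_self[OF subH] .

lemma rsame: "x \<in> carrier G \<Longrightarrow> z \<in> H #> x \<Longrightarrow> H #> z = H #> x"
  using rc_same[OF subH] .

lemma rcard: "x \<in> carrier G \<Longrightarrow> card (H #> x) = card H"
  using rc_card[OF subH] .

lemma rsub: "x \<in> carrier G \<Longrightarrow> H #> x \<subseteq> carrier G"
  using rc_sub[OF subH] .

lemma rsym: "x \<in> carrier G \<Longrightarrow> t \<in> H #> x \<Longrightarrow> x \<in> H #> t"
proof -
  assume a: "x \<in> carrier G" "t \<in> H #> x"
  have "t \<in> carrier G" using a rsub by blast
  then show ?thesis using rsame[OF a] rself[OF \<open>t \<in> carrier G\<close>] rself[OF a(1)] by simp
qed

lemma dcos_mem: "x \<in> dcos G H g \<longleftrightarrow> (\<exists>a b. a \<in> H \<and> b \<in> H \<and> x = a \<otimes> g \<otimes> b)"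
  unfolding dcos_def by blast

lemma dcos_carrier: "g \<in> carrier G \<Longrightarrow> dcos G H g \<subseteq> carrier G"
  unfolding dcos_def by auto

lemma dcos_self: "g \<in> carrier G \<Longrightarrow> g \<in> dcos G H g"
  unfolding dcos_mem by (rule exI[of _ \<one>], rule exI[of _ \<one>]) simp

lemma dcos_closed:
  assumes g: "g \<in> carrier G" and x: "x \<in> dcos G H g" and ab: "a \<in> H" "b \<in> H"
  shows "a \<otimes> x \<otimes> b \<in> dcos G H g"
proof -
  obtain c d where cd: "c \<in> H" "d \<in> H" "x = c \<otimes> g \<otimes> d" using x unfolding dcos_mem by blast
  have "a \<otimes> x \<otimes> b = (a \<otimes> c) \<otimes> g \<otimes> (d \<otimes> b)" using cd ab g by (simp add: m_assoc)
  then show ?thesis unfolding dcos_mem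
    by (intro exI[of _ "a \<otimes> c"] exI[of _ "d \<otimes> b"]) (use cd ab in simp)
qed

lemma dcos_same:
  assumes g: "g \<in> carrier G" and x: "x \<in> dcos G H g"
  shows "dcos G H x = dcos G H g"
proof -
  obtain c d where cd: "c \<in> H" "d \<in> H" "x = c \<otimes> g \<otimes> d" using x unfolding dcos_mem by blast
  have xc: "x \<in> carrier G" using x dcos_carrier g by blast
  have "g = inv c \<otimes> x \<otimes> inv d" using cd g by (simp add: m_assoc)
  then have gx: "g \<in> dcos G H x" using dcos_closed[OF xc dcos_self[OF xc], of "inv c" "inv d"] cd by simp
  show ?thesis
  proof
    show "dcos G H x \<subseteq> dcos G H g"
    proof
      fix y assume "y \<in> dcos G H x"
      then obtain a b where "a \<in> H" "b \<in> H" "y = a \<otimes> x \<otimes> b" unfolding dcos_mem by blast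
      then show "y \<in> dcos G H g" using dcos_closed[OF g x] by simp
    qed
    show "dcos G H g \<subseteq> dcos G H x"
    proof
      fix y assume "y \<in> dcos G H g"
      then obtain a b where "a \<in> H" "b \<in> H" "y = a \<otimes> g \<otimes> b" unfolding dcos_mem by blast
      then show "y \<in> dcos G H x" using dcos_closed[OF xc gx] by simp
    qed
  qed
qed

lemma dcos_inv:
  assumes g: "g \<in> carrier G"
  shows "(\<lambda>x. inv x) ` dcos G H g = dcos G H (inv g)"
proof
  show "(\<lambda>x. inv x) ` dcos G H g \<subseteq> dcos G H (inv g)"
  proof
    fix y assume "y \<in> (\<lambda>x. inv x) ` dcos G H g"
    then obtain x where x: "x \<in> dcos G H g" "y = inv x" by blast
    then obtain a b where ab: "a \<in> H" "b \<in> H" "y = inv (a \<otimes> g \<otimes> b)" unfolding dcos_mem by blast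
    then have "y = inv b \<otimes> inv g \<otimes> inv a" using g by (simp add: inv_mult_group m_assoc)
    then show "y \<in> dcos G H (inv g)" unfolding dcos_mem
      by (intro exI[of _ "inv b"] exI[of _ "inv a"]) (use ab in simp)
  qed
  show "dcos G H (inv g) \<subseteq> (\<lambda>x. inv x) ` dcos G H g"
  proof
    fix y assume "y \<in> dcos G H (inv g)"
    then obtain a b where ab: "a \<in> H" "b \<in> H" "y = a \<otimes> inv g \<otimes> b" unfolding dcos_mem by blast
    then have "y = inv (inv b \<otimes> g \<otimes> inv a)" using g by (simp add: inv_mult_group m_assoc)
    moreover have "inv b \<otimes> g \<otimes> inv a \<in> dcos G H g" unfolding dcos_mem
      by (intro exI[of _ "inv b"] exI[of _ "inv a"]) (use ab in simp)
    ultimately show "y \<in> (\<lambda>x. inv x) ` dcos G H g" by blast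
  qed
qed

lemma rc_in_dcos:
  assumes g: "g \<in> carrier G" and x: "x \<in> dcos G H g"
  shows "H #> x \<subseteq> dcos G H g"
proof
  fix z assume z: "z \<in> H #> x"
  have xc: "x \<in> carrier G" using x dcos_carrier g by blast
  have zc: "z \<in> carrier G" and zi: "z \<otimes> inv x \<in> H" using z rmem[OF xc] by auto
  have "z = (z \<otimes> inv x) \<otimes> x \<otimes> \<one>" using zc xc by (simp add: m_assoc)
  then show "z \<in> dcos G H g" using dcos_closed[OF g x zi H1] by simp
qed

lemma meet:
  assumes g: "g \<in> carrier G" and d: "d \<in> dcos G H g" and e: "e \<in> dcos G H (inv g)"
  shows "\<exists>t\<in>H #> d. inv t \<in> H #> e"
proof -
  obtain a b where ab: "a \<in> H" "b \<in> H" "d = a \<otimes> g \<otimes> b" using d unfolding dcos_mem by blast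
  obtain c f where cf: "c \<in> H" "f \<in> H" "e = c \<otimes> inv g \<otimes> f" using e unfolding dcos_mem by blast
  define t where "t = inv f \<otimes> g \<otimes> b"
  have tc: "t \<in> carrier G" unfolding t_def using cf ab g by simp
  have dc: "d \<in> carrier G" using ab g by simp
  have ec: "e \<in> carrier G" using cf g by simp
  have "t \<otimes> inv d = inv f \<otimes> inv a" unfolding t_def ab(3) using ab cf g
    by (simp add: inv_mult_group m_assoc)
  then have t1: "t \<in> H #> d" using rmem[OF dc] tc ab cf by simp
  have "inv t \<otimes> inv e = inv b \<otimes> inv c" unfolding t_def cf(3) using ab cf g
    by (simp add: inv_mult_group m_assoc)
  then have t2: "inv t \<in> H #> e" using rmem[OF ec] tc ab cf by simp
  show ?thesis using t1 t2 by blast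
qed

lemma partition_card:
  assumes W: "W \<subseteq> carrier G" "finite W" "\<forall>w\<in>W. H #> w \<subseteq> W"
  shows "card W = card ((\<lambda>x. H #> x) ` W) * card H"
proof -
  let ?C = "(\<lambda>x. H #> x) ` W"
  have U: "\<Union>?C = W"
  proof
    show "\<Union>?C \<subseteq> W" using W(3) by blast
    show "W \<subseteq> \<Union>?C" using W(1) rself by blast
  qed
  have "card H * card ?C = card (\<Union>?C)"
  proof (rule card_partition)
    show "finite ?C" using W(2) by simp
    show "finite (\<Union>?C)" using U W(2) by simp
    show "\<And>c. c \<in> ?C \<Longrightarrow> card c = card H" using W(1) rcard by blast
    show "\<And>c1 c2. c1 \<in> ?C \<Longrightarrow> c2 \<in> ?C \<Longrightarrow> c1 \<noteq> c2 \<Longrightarrow> c1 \<inter> c2 = {}"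
    proof -
      fix c1 c2 assume c: "c1 \<in> ?C" "c2 \<in> ?C" "c1 \<noteq> c2"
      then obtain x y where xy: "x \<in> W" "y \<in> W" "c1 = H #> x" "c2 = H #> y" by blast
      show "c1 \<inter> c2 = {}"
      proof (rule ccontr)
        assume "c1 \<inter> c2 \<noteq> {}"
        then obtain z where "z \<in> H #> x" "z \<in> H #> y" using xy by blast
        then have "H #> z = H #> x" "H #> z = H #> y" using rsame xy W(1) by (simp_all add: subset_iff)
        then have "H #> x = H #> y" by simp
        then show False using c xy by simp
      qed
    qed
  qed
  then show ?thesis using U by (simp add: mult.commute)
qed

end



context hg begin

lemma finH: "finite (carrier G) \<Longrightarrow> finite H"
  using finite_subset[OF subgroup.subset[OF subH]] by blast

lemma cosets_dvd:
  assumes fin: "finite (carrier G)" and g: "g \<in> carrier G"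
  shows "card ((\<lambda>x. H #> x) ` dcos G H g) dvd card H"
proof -
  define f where "f h = H #> (g \<otimes> h)" for h
  let ?Om = "(\<lambda>x. H #> x) ` dcos G H g"
  have Om: "?Om = f ` H"
  proof
    show "?Om \<subseteq> f ` H"
    proof
      fix C assume "C \<in> ?Om"
      then obtain x where x: "x \<in> dcos G H g" "C = H #> x" by blast
      then obtain a b where ab: "a \<in> H" "b \<in> H" "x = a \<otimes> g \<otimes> b" unfolding dcos_mem by blast
      have "x \<otimes> inv (g \<otimes> b) = a" using ab g by (simp add: m_assoc inv_mult_group)
      then have "H #> x = H #> (g \<otimes> b)" using req[of x "g \<otimes> b"] ab g by simp
      then have "C = f b" unfolding f_def using x(2) by simp
      then show "C \<in> f ` H" using ab(2) by blast
    qed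
    show "f ` H \<subseteq> ?Om"
    proof
      fix C assume "C \<in> f ` H"
      then obtain h where h: "h \<in> H" "C = f h" by blast
      have "g \<otimes> h \<in> dcos G H g" unfolding dcos_mem
        by (intro exI[of _ \<one>] exI[of _ h]) (use h g in simp)
      then show "C \<in> ?Om" using h unfolding f_def by blast
    qed
  qed
  define F where "F C = {h \<in> H. f h = C}" for C
  have key: "f h = f h0 \<longleftrightarrow> g \<otimes> (h \<otimes> inv h0) \<otimes> inv g \<in> H" if "h \<in> H" "h0 \<in> H" for h h0
  proof -
    have "(g \<otimes> h) \<otimes> inv (g \<otimes> h0) = g \<otimes> (h \<otimes> inv h0) \<otimes> inv g"
      using that g by (simp add: m_assoc inv_mult_group)
    then show ?thesis unfolding f_def using req[of "g \<otimes> h" "g \<otimes> h0"] that g by simp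
  qed
  have Fh0: "F (f h0) = (\<lambda>u. u \<otimes> h0) ` F (f \<one>)" if h0: "h0 \<in> H" for h0
  proof
    show "F (f h0) \<subseteq> (\<lambda>u. u \<otimes> h0) ` F (f \<one>)"
    proof
      fix h assume "h \<in> F (f h0)"
      then have h: "h \<in> H" "f h = f h0" unfolding F_def by auto
      have "h \<otimes> inv h0 \<in> F (f \<one>)" unfolding F_def
        using key[OF _ H1, of "h \<otimes> inv h0"] key[OF h(1) h0] h h0 by simp
      moreover have "h = (h \<otimes> inv h0) \<otimes> h0" using h h0 by (simp add: m_assoc)
      ultimately show "h \<in> (\<lambda>u. u \<otimes> h0) ` F (f \<one>)" by (rule rev_image_eqI)
    qed
    show "(\<lambda>u. u \<otimes> h0) ` F (f \<one>) \<subseteq> F (f h0)"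
    proof
      fix h assume "h \<in> (\<lambda>u. u \<otimes> h0) ` F (f \<one>)"
      then obtain u where u: "u \<in> H" "f u = f \<one>" "h = u \<otimes> h0" unfolding F_def by blast
      have "u \<otimes> h0 \<otimes> inv h0 = u" using u h0 by (simp add: m_assoc)
      then have "f (u \<otimes> h0) = f h0" using key[of "u \<otimes> h0" h0] key[OF u(1) H1] u h0 by simp
      then show "h \<in> F (f h0)" unfolding F_def using u h0 by simp
    qed
  qed
  have cardF: "card (F (f h0)) = card (F (f \<one>))" if "h0 \<in> H" for h0
  proof -
    have "inj_on (\<lambda>u. u \<otimes> h0) (F (f \<one>))"
    proof (rule inj_onI)
      fix u v assume "u \<in> F (f \<one>)" "v \<in> F (f \<one>)" "u \<otimes> h0 = v \<otimes> h0"
      then show "u = v" using that unfolding F_def by simp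
    qed
    then show ?thesis unfolding Fh0[OF that] by (rule card_image)
  qed
  have finOm: "finite ?Om" using fin dcos_carrier[OF g] finite_subset by blast
  have U: "\<Union>(F ` ?Om) = H"
  proof
    show "\<Union>(F ` ?Om) \<subseteq> H" unfolding F_def by blast
    show "H \<subseteq> \<Union>(F ` ?Om)"
    proof
      fix h assume h: "h \<in> H"
      then have "h \<in> F (f h)" unfolding F_def by simp
      moreover have "f h \<in> ?Om" using Om h by blast
      ultimately show "h \<in> \<Union>(F ` ?Om)" by blast
    qed
  qed
  have "card (F (f \<one>)) * card (F ` ?Om) = card (\<Union>(F ` ?Om))"
  proof (rule card_partition)
    show "finite (F ` ?Om)" using finOm by simp
    show "finite (\<Union>(F ` ?Om))" unfolding U using finH[OF fin] .
    show "\<And>c. c \<in> F ` ?Om \<Longrightarrow> card c = card (F (f \<one>))"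
    proof -
      fix c assume "c \<in> F ` ?Om"
      then obtain C where C: "C \<in> ?Om" "c = F C" by blast
      then have "C \<in> f ` H" using Om by simp
      then obtain h where "h \<in> H" "C = f h" by blast
      then have "h \<in> H" "c = F (f h)" using C by simp_all
      then show "card c = card (F (f \<one>))" using cardF[OF \<open>h \<in> H\<close>] by simp
    qed
    show "\<And>c1 c2. c1 \<in> F ` ?Om \<Longrightarrow> c2 \<in> F ` ?Om \<Longrightarrow> c1 \<noteq> c2 \<Longrightarrow> c1 \<inter> c2 = {}"
      unfolding F_def by blast
  qed
  moreover have "card (F ` ?Om) = card ?Om"
  proof (rule card_image, rule inj_onI)
    fix C1 C2 assume c: "C1 \<in> ?Om" "C2 \<in> ?Om" "F C1 = F C2"
    have "C1 \<in> f ` H" using c(1) Om by simp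
    then obtain h1 where h1: "h1 \<in> H" "C1 = f h1" by blast
    then have "h1 \<in> F C1" unfolding F_def by simp
    then have "h1 \<in> F C2" using c by simp
    then show "C1 = C2" using h1 unfolding F_def by simp
  qed
  ultimately have "card H = card (F (f \<one>)) * card ?Om" using U by simp
  then show ?thesis by simp
qed

lemma gen_pairing:
  assumes O: "\<Omega>1 \<union> \<Omega>2 \<subseteq> (\<lambda>x. H #> x) ` carrier G" and dis: "\<Omega>1 \<inter> \<Omega>2 = {}"
    and bij: "bij_betw \<beta> \<Omega>1 \<Omega>2" and ex: "\<forall>C\<in>\<Omega>1. \<exists>t\<in>C. inv t \<in> \<beta> C"
  shows "\<exists>T. T \<subseteq> \<Union>(\<Omega>1 \<union> \<Omega>2) \<and> (\<forall>t\<in>T. inv t \<in> T) \<and> (\<forall>C\<in>\<Omega>1 \<union> \<Omega>2. \<exists>!t. t \<in> T \<and> t \<in> C)"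
proof -
  define sel where "sel C = (SOME t. t \<in> C \<and> inv t \<in> \<beta> C)" for C
  have sel: "sel C \<in> C \<and> inv (sel C) \<in> \<beta> C" if "C \<in> \<Omega>1" for C
  proof -
    have "\<exists>t. t \<in> C \<and> inv t \<in> \<beta> C" using ex that by blast
    then show ?thesis unfolding sel_def by (rule someI_ex)
  qed
  have cc: "t \<in> carrier G" if tC: "t \<in> C" and CO: "C \<in> \<Omega>1 \<union> \<Omega>2" for t C
  proof -
    obtain x where "x \<in> carrier G" "C = H #> x" using O CO by blast
    then show ?thesis using rsub tC by blast
  qed
  have same: "C = C'" if st: "t \<in> C" "t \<in> C'" "C \<in> \<Omega>1 \<union> \<Omega>2" "C' \<in> \<Omega>1 \<union> \<Omega>2" for t C C'
  proof -
    obtain x where x: "x \<in> carrier G" "C = H #> x" using O st(3) by blast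
    obtain y where y: "y \<in> carrier G" "C' = H #> y" using O st(4) by blast
    have "H #> t = H #> x" using rsame x st(1) by simp
    moreover have "H #> t = H #> y" using rsame y st(2) by simp
    ultimately show ?thesis using x y by simp
  qed
  have bin: "\<beta> C \<in> \<Omega>2" if "C \<in> \<Omega>1" for C using bij that bij_betw_apply by fast
  have binj: "C = C'" if "C \<in> \<Omega>1" "C' \<in> \<Omega>1" "\<beta> C = \<beta> C'" for C C'
    using bij that unfolding bij_betw_def inj_on_def by blast
  have bsurj: "\<exists>C0\<in>\<Omega>1. C = \<beta> C0" if "C \<in> \<Omega>2" for C
    using bij that unfolding bij_betw_def by blast
  define R where "R = sel ` \<Omega>1"
  define T where "T = R \<union> (\<lambda>x. inv x) ` R"
  have Rc: "r \<in> carrier G" if "r \<in> R" for r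
    using that sel cc unfolding R_def by blast
  have T1: "T \<subseteq> \<Union>(\<Omega>1 \<union> \<Omega>2)"
  proof
    fix t assume "t \<in> T"
    then consider (a) C where "C \<in> \<Omega>1" "t = sel C" | (b) C where "C \<in> \<Omega>1" "t = inv (sel C)"
      unfolding T_def R_def by blast
    then show "t \<in> \<Union>(\<Omega>1 \<union> \<Omega>2)"
    proof cases
      case a then show ?thesis using sel[OF a(1)] by blast
    next
      case b then show ?thesis using sel[OF b(1)] bin[OF b(1)] by blast
    qed
  qed
  have T2: "\<forall>t\<in>T. inv t \<in> T"
  proof
    fix t assume "t \<in> T"
    then consider (a) "t \<in> R" | (b) r where "r \<in> R" "t = inv r" unfolding T_def by blast
    then show "inv t \<in> T"
    proof cases
      case a then show ?thesis unfolding T_def by blast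
    next
      case b then have "inv t = r" using Rc by simp
      then show ?thesis using b unfolding T_def by blast
    qed
  qed
  have T3: "\<exists>!t. t \<in> T \<and> t \<in> C" if C: "C \<in> \<Omega>1 \<union> \<Omega>2" for C
  proof (cases "C \<in> \<Omega>1")
    case True
    show ?thesis
    proof (rule ex1I[of _ "sel C"])
      show "sel C \<in> T \<and> sel C \<in> C" using sel[OF True] True unfolding T_def R_def by blast
      fix t assume t: "t \<in> T \<and> t \<in> C"
      then consider (a) C' where "C' \<in> \<Omega>1" "t = sel C'" | (b) C' where "C' \<in> \<Omega>1" "t = inv (sel C')"
        unfolding T_def R_def by blast
      then show "t = sel C"
      proof cases
        case a
        then have "C' = C" using same[of t C' C] sel[OF a(1)] t C by simp
        then show ?thesis using a by simp
      next
        case b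
        then have "\<beta> C' = C" using same[of t "\<beta> C'" C] sel[OF b(1)] bin[OF b(1)] t C by simp
        then show ?thesis using bin[OF b(1)] True dis by blast
      qed
    qed
  next
    case False
    then have C2: "C \<in> \<Omega>2" using C by blast
    then obtain C0 where C0: "C0 \<in> \<Omega>1" "C = \<beta> C0" using bsurj by blast
    show ?thesis
    proof (rule ex1I[of _ "inv (sel C0)"])
      show "inv (sel C0) \<in> T \<and> inv (sel C0) \<in> C" using sel[OF C0(1)] C0 unfolding T_def R_def by blast
      fix t assume t: "t \<in> T \<and> t \<in> C"
      then consider (a) C' where "C' \<in> \<Omega>1" "t = sel C'" | (b) C' where "C' \<in> \<Omega>1" "t = inv (sel C')"
        unfolding T_def R_def by blast
      then show "t = inv (sel C0)"
      proof cases
        case a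
        then have "C' = C" using same[of t C' C] sel[OF a(1)] t C by simp
        then show ?thesis using a C2 dis by blast
      next
        case b
        then have "\<beta> C' = C" using same[of t "\<beta> C'" C] sel[OF b(1)] bin[OF b(1)] t C by simp
        then have "C' = C0" using binj[OF b(1) C0(1)] C0(2) by simp
        then show ?thesis using b by simp
      qed
    qed
  qed
  have T3': "\<forall>C\<in>\<Omega>1 \<union> \<Omega>2. \<exists>!t. t \<in> T \<and> t \<in> C" using T3 by (intro ballI)
  show ?thesis
    apply (rule exI[of _ T])
    apply (intro conjI)
      apply (rule T1)
     apply (rule T2)
    apply (rule T3')
    done
qed

end



context hg begin

lemma piece:
  assumes fin: "finite (carrier G)" and pow: "card H = 2 ^ k"
    and star: "\<forall>y\<in>carrier G. H #> y = y <# H \<and> y \<otimes> y \<in> H \<longrightarrow> (\<exists>t\<in>H #> y. t \<otimes> t = \<one>)"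
    and g: "g \<in> carrier G"
  shows "\<exists>T. T \<subseteq> dcos G H g \<union> dcos G H (inv g) \<and> (\<forall>t\<in>T. inv t \<in> T) \<and>
    (\<forall>x\<in>dcos G H g \<union> dcos G H (inv g). \<exists>!t. t \<in> T \<and> t \<in> H #> x)"
proof -
  let ?D = "dcos G H g"
  let ?E = "dcos G H (inv g)"
  have ig: "inv g \<in> carrier G" using g by simp
  have Dc: "?D \<subseteq> carrier G" "?E \<subseteq> carrier G" using dcos_carrier g ig by auto
  have fromGen: "\<exists>T. T \<subseteq> ?D \<union> ?E \<and> (\<forall>t\<in>T. inv t \<in> T) \<and> (\<forall>x\<in>?D \<union> ?E. \<exists>!t. t \<in> T \<and> t \<in> H #> x)"
    if un: "\<Omega>1 \<union> \<Omega>2 = (\<lambda>x. H #> x) ` (?D \<union> ?E)" and dis: "\<Omega>1 \<inter> \<Omega>2 = {}"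
      and bij: "bij_betw \<beta> \<Omega>1 \<Omega>2" and ex: "\<forall>C\<in>\<Omega>1. \<exists>t\<in>C. inv t \<in> \<beta> C" for \<Omega>1 \<Omega>2 \<beta>
  proof -
    have "\<Omega>1 \<union> \<Omega>2 \<subseteq> (\<lambda>x. H #> x) ` carrier G" using un Dc by auto
    from gen_pairing[OF this dis bij ex] obtain T where
      T: "T \<subseteq> \<Union>(\<Omega>1 \<union> \<Omega>2)" "\<forall>t\<in>T. inv t \<in> T" "\<forall>C\<in>\<Omega>1 \<union> \<Omega>2. \<exists>!t. t \<in> T \<and> t \<in> C"
      by blast
    have "\<Union>(\<Omega>1 \<union> \<Omega>2) \<subseteq> ?D \<union> ?E" unfolding un using rc_in_dcos g ig by blast
    then have T1: "T \<subseteq> ?D \<union> ?E" using T(1) by blast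
    have T3: "\<forall>x\<in>?D \<union> ?E. \<exists>!t. t \<in> T \<and> t \<in> H #> x"
    proof
      fix x assume "x \<in> ?D \<union> ?E"
      then have "H #> x \<in> \<Omega>1 \<union> \<Omega>2" unfolding un by blast
      then show "\<exists>!t. t \<in> T \<and> t \<in> H #> x" using T(3) by blast
    qed
    show ?thesis
      apply (rule exI[of _ T])
      apply (intro conjI)
        apply (rule T1)
       apply (rule T(2))
      apply (rule T3)
      done
  qed
  have finD: "finite ?D" "finite ?E" using fin Dc finite_subset by auto
  show ?thesis
  proof (cases "inv g \<in> ?D")
    case False
    define \<Omega>1 where "\<Omega>1 = (\<lambda>x. H #> x) ` ?D"
    define \<Omega>2 where "\<Omega>2 = (\<lambda>x. H #> x) ` ?E"
    have dis: "\<Omega>1 \<inter> \<Omega>2 = {}"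
    proof (rule ccontr)
      assume "\<Omega>1 \<inter> \<Omega>2 \<noteq> {}"
      then obtain d e where de: "d \<in> ?D" "e \<in> ?E" "H #> d = H #> e" unfolding \<Omega>1_def \<Omega>2_def by blast
      have dc: "d \<in> carrier G" using de Dc by blast
      have "d \<in> H #> e" using rself[OF dc] de(3) by simp
      then have "d \<in> ?E" using rc_in_dcos[OF ig de(2)] by blast
      then have "dcos G H d = ?E" using dcos_same[OF ig] by simp
      moreover have "dcos G H d = ?D" using dcos_same[OF g de(1)] .
      ultimately have "inv g \<in> ?D" using dcos_self[OF ig] by simp
      then show False using False by simp
    qed
    have closD: "\<forall>w\<in>?D. H #> w \<subseteq> ?D" using rc_in_dcos[OF g] by blast
    have closE: "\<forall>w\<in>?E. H #> w \<subseteq> ?E" using rc_in_dcos[OF ig] by blast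
    have cD: "card ?D = card \<Omega>1 * card H" unfolding \<Omega>1_def by (rule partition_card[OF Dc(1) finD(1) closD])
    have cE: "card ?E = card \<Omega>2 * card H" unfolding \<Omega>2_def by (rule partition_card[OF Dc(2) finD(2) closE])
    have "inj_on (\<lambda>x. inv x) ?D"
    proof (rule inj_onI)
      fix u v assume uv: "u \<in> ?D" "v \<in> ?D" "inv u = inv v"
      then have "inv (inv u) = inv (inv v)" by simp
      then show "u = v" using uv(1,2) Dc(1) by (simp add: subset_iff)
    qed
    then have "card ((\<lambda>x. inv x) ` ?D) = card ?D" by (rule card_image)
    then have cED: "card ?E = card ?D" using dcos_inv[OF g] by simp
    have "H \<noteq> {}" using H1 by blast
    then have Hpos: "card H > 0" using finH[OF fin] by (simp add: card_gt_0_iff)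
    have "card \<Omega>1 = card \<Omega>2" using cD cE cED Hpos by simp
    moreover have "finite \<Omega>1" "finite \<Omega>2" unfolding \<Omega>1_def \<Omega>2_def using finD by simp_all
    ultimately obtain \<beta> where \<beta>: "bij_betw \<beta> \<Omega>1 \<Omega>2" using finite_same_card_bij by metis
    have ex: "\<forall>C\<in>\<Omega>1. \<exists>t\<in>C. inv t \<in> \<beta> C"
    proof
      fix C assume C: "C \<in> \<Omega>1"
      then obtain d where d: "d \<in> ?D" "C = H #> d" unfolding \<Omega>1_def by blast
      have "\<beta> C \<in> \<Omega>2" using \<beta> C bij_betw_apply by fast
      then obtain e where e: "e \<in> ?E" "\<beta> C = H #> e" unfolding \<Omega>2_def by blast
      show "\<exists>t\<in>C. inv t \<in> \<beta> C" using meet[OF g d(1) e(1)] d(2) e(2) by simp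
    qed
    have un: "\<Omega>1 \<union> \<Omega>2 = (\<lambda>x. H #> x) ` (?D \<union> ?E)" unfolding \<Omega>1_def \<Omega>2_def by (simp add: image_Un)
    show ?thesis by (rule fromGen[OF un dis \<beta> ex])
  next
    case True
    have DE: "?E = ?D" using dcos_same[OF g True] .
    define Om where "Om = (\<lambda>x. H #> x) ` ?D"
    have finOm: "finite Om" unfolding Om_def using finD by simp
    have "card Om dvd 2 ^ k" using cosets_dvd[OF fin g] pow unfolding Om_def by simp
    then obtain j where j: "j \<le> k" "normalize (card Om) = 2 ^ j"
      using divides_primepow[OF two_is_prime_nat] by blast
    then have cj: "card Om = 2 ^ j" by simp
    show ?thesis
    proof (cases "j = 0")
      case True
      then have c1: "card Om = 1" using cj by simp
      have gOm: "H #> g \<in> Om" unfolding Om_def using dcos_self[OF g] by blast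
      obtain Y0 where Y0: "Om = {Y0}" using c1 card_1_singletonE by blast
      have OmS: "Om = {H #> g}" using Y0 gOm by simp
      have Dg: "?D = H #> g"
      proof
        show "H #> g \<subseteq> ?D" using rc_in_dcos[OF g dcos_self[OF g]] .
        show "?D \<subseteq> H #> g"
        proof
          fix x assume x: "x \<in> ?D"
          then have "H #> x \<in> Om" unfolding Om_def by blast
          then have "H #> x = H #> g" using OmS by simp
          moreover have "x \<in> H #> x" using rself x Dc by auto
          ultimately show "x \<in> H #> g" by simp
        qed
      qed
      have lc: "g <# H \<subseteq> ?D"
      proof
        fix z assume "z \<in> g <# H"
        then obtain h where h: "h \<in> H" "z = g \<otimes> h" unfolding l_coset_def by blast
        show "z \<in> ?D" unfolding dcos_mem
          by (intro exI[of _ \<one>] exI[of _ h]) (use h g in simp)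
      qed
      have "card (g <# H) = card H"
      proof -
        have "g <# H = (\<lambda>h. g \<otimes> h) ` H" unfolding l_coset_def by auto
        moreover have "inj_on (\<lambda>h. g \<otimes> h) H"
        proof (rule inj_onI)
          fix u v assume "u \<in> H" "v \<in> H" "g \<otimes> u = g \<otimes> v"
          then show "u = v" using g by simp
        qed
        ultimately show ?thesis by (simp add: card_image)
      qed
      moreover have "card ?D = card H" using Dg rcard[OF g] by simp
      ultimately have "g <# H = ?D" using card_subset_eq[OF finD(1) lc] by simp
      then have hl: "H #> g = g <# H" using Dg by simp
      have "inv g \<in> H #> g" using \<open>inv g \<in> ?D\<close> Dg by simp
      then have "inv g \<otimes> inv g \<in> H" using rmem[OF g] by simp
      then have "inv (inv g \<otimes> inv g) \<in> H" by simp
      then have gg: "g \<otimes> g \<in> H" using g by (simp add: inv_mult_group)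
      obtain t where t: "t \<in> H #> g" "t \<otimes> t = \<one>" using star g hl gg by blast
      have tc: "t \<in> carrier G" using t(1) rsub[OF g] by blast
      have ti: "inv t = t" using inv_equality[OF t(2) tc tc] .
      show ?thesis
      proof (intro exI[of _ "{t}"] conjI)
        show "{t} \<subseteq> ?D \<union> ?E" using t(1) Dg by simp
        show "\<forall>s\<in>{t}. inv s \<in> {t}" using ti by simp
        show "\<forall>x\<in>?D \<union> ?E. \<exists>!s. s \<in> {t} \<and> s \<in> H #> x"
        proof
          fix x assume "x \<in> ?D \<union> ?E"
          then have x: "x \<in> H #> g" using DE Dg by simp
          then have "H #> x = H #> g" using rsame[OF g] by simp
          then show "\<exists>!s. s \<in> {t} \<and> s \<in> H #> x" using t(1) by auto
        qed
      qed
    next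
      case False
      then have ev: "even (card Om)" using cj by simp
      obtain \<Omega>1 where O1: "\<Omega>1 \<subseteq> Om" "card \<Omega>1 = card Om div 2" "finite \<Omega>1"
        using obtain_subset_with_card_n[of "card Om div 2" Om] by auto
      define \<Omega>2 where "\<Omega>2 = Om - \<Omega>1"
      have c2: "card \<Omega>2 = card Om div 2" unfolding \<Omega>2_def
        using card_Diff_subset[OF O1(3) O1(1)] O1(2) ev by auto
      have fin2: "finite \<Omega>2" unfolding \<Omega>2_def using finOm by simp
      obtain \<beta> where \<beta>: "bij_betw \<beta> \<Omega>1 \<Omega>2" using finite_same_card_bij[OF O1(3) fin2] O1(2) c2 by auto
      have dis: "\<Omega>1 \<inter> \<Omega>2 = {}" unfolding \<Omega>2_def by blast
      have un: "\<Omega>1 \<union> \<Omega>2 = (\<lambda>x. H #> x) ` (?D \<union> ?E)" unfolding \<Omega>2_def using O1(1) DE Om_def by auto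
      have ex: "\<forall>C\<in>\<Omega>1. \<exists>t\<in>C. inv t \<in> \<beta> C"
      proof
        fix C assume C: "C \<in> \<Omega>1"
        then obtain d where d: "d \<in> ?D" "C = H #> d" using O1(1) unfolding Om_def by blast
        have "\<beta> C \<in> \<Omega>2" using \<beta> C bij_betw_apply by fast
        then obtain e where e: "e \<in> ?D" "\<beta> C = H #> e" unfolding \<Omega>2_def Om_def by blast
        have e': "e \<in> ?E" using e DE by simp
        show "\<exists>t\<in>C. inv t \<in> \<beta> C" using meet[OF g d(1) e'] d(2) e(2) by simp
      qed
      show ?thesis by (rule fromGen[OF un dis \<beta> ex])
    qed
  qed
qed

end



context hg begin

lemma trans_W:
  assumes fin: "finite (carrier G)" and pow: "card H = 2 ^ k"
    and star: "\<forall>y\<in>carrier G. H #> y = y <# H \<and> y \<otimes> y \<in> H \<longrightarrow> (\<exists>t\<in>H #> y. t \<otimes> t = \<one>)"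
  shows "W \<subseteq> carrier G \<Longrightarrow> (\<forall>w\<in>W. \<forall>a\<in>H. \<forall>b\<in>H. a \<otimes> w \<otimes> b \<in> W) \<Longrightarrow> (\<forall>w\<in>W. inv w \<in> W) \<Longrightarrow>
    \<exists>T. T \<subseteq> W \<and> (\<forall>t\<in>T. inv t \<in> T) \<and> (\<forall>x\<in>W. \<exists>!t. t \<in> T \<and> t \<in> H #> x)"
proof (induction "card W" arbitrary: W rule: less_induct)
  case (less W)
  show ?case
  proof (cases "W = {}")
    case True
    show ?thesis by (rule exI[of _ "{}"]) (use True in simp)
  next
    case False
    then obtain g where gW: "g \<in> W" by blast
    have g: "g \<in> carrier G" using gW less.prems(1) by blast
    have ig: "inv g \<in> carrier G" using g by simp
    let ?U = "dcos G H g \<union> dcos G H (inv g)"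
    have igW: "inv g \<in> W" using gW less.prems(3) by blast
    have UW: "?U \<subseteq> W"
    proof
      fix x assume "x \<in> ?U"
      then consider "x \<in> dcos G H g" | "x \<in> dcos G H (inv g)" by blast
      then show "x \<in> W"
      proof cases
        case 1
        then obtain a b where "a \<in> H" "b \<in> H" "x = a \<otimes> g \<otimes> b" unfolding dcos_mem by blast
        then show ?thesis using less.prems(2) gW by simp
      next
        case 2
        then obtain a b where "a \<in> H" "b \<in> H" "x = a \<otimes> inv g \<otimes> b" unfolding dcos_mem by blast
        then show ?thesis using less.prems(2) igW by simp
      qed
    qed
    have Ucl: "a \<otimes> x \<otimes> b \<in> ?U" if "x \<in> ?U" "a \<in> H" "b \<in> H" for x a b
      using that dcos_closed[OF g] dcos_closed[OF ig] by blast
    have Uinv: "inv x \<in> ?U" if xU: "x \<in> ?U" for x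
    proof -
      have "inv x \<in> (\<lambda>x. inv x) ` dcos G H g \<or> inv x \<in> (\<lambda>x. inv x) ` dcos G H (inv g)"
        using xU by blast
      then show ?thesis using dcos_inv[OF g] dcos_inv[OF ig] g by auto
    qed
    have Urc: "H #> x \<subseteq> ?U" if "x \<in> ?U" for x
      using that rc_in_dcos[OF g] rc_in_dcos[OF ig] by blast
    define W' where "W' = W - ?U"
    have finW: "finite W" using fin less.prems(1) finite_subset by blast
    have "g \<in> ?U" using dcos_self[OF g] by blast
    then have "W' \<subset> W" unfolding W'_def using gW by blast
    then have lt: "card W' < card W" using finW by (simp add: psubset_card_mono)
    have W'1: "W' \<subseteq> carrier G" using less.prems(1) W'_def by blast
    have W'2: "\<forall>w\<in>W'. \<forall>a\<in>H. \<forall>b\<in>H. a \<otimes> w \<otimes> b \<in> W'"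
    proof (intro ballI)
      fix w a b assume w: "w \<in> W'" "a \<in> H" "b \<in> H"
      have wc: "w \<in> carrier G" using w W'1 by blast
      have wW: "w \<in> W" "w \<notin> ?U" using w(1) unfolding W'_def by simp_all
      have "a \<otimes> w \<otimes> b \<in> W" using wW(1) w(2,3) less.prems(2) by blast
      moreover have "a \<otimes> w \<otimes> b \<notin> ?U"
      proof
        assume "a \<otimes> w \<otimes> b \<in> ?U"
        then have "inv a \<otimes> (a \<otimes> w \<otimes> b) \<otimes> inv b \<in> ?U" using Ucl w by simp
        moreover have "inv a \<otimes> (a \<otimes> w \<otimes> b) \<otimes> inv b = w" using w wc by (simp add: m_assoc)
        ultimately show False using wW(2) by simp
      qed
      ultimately show "a \<otimes> w \<otimes> b \<in> W'" unfolding W'_def by blast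
    qed
    have W'3: "\<forall>w\<in>W'. inv w \<in> W'"
    proof
      fix w assume w: "w \<in> W'"
      have wc: "w \<in> carrier G" using w W'1 by blast
      have wW: "w \<in> W" "w \<notin> ?U" using w(1) unfolding W'_def by simp_all
      have "inv w \<in> W" using wW(1) less.prems(3) by blast
      moreover have "inv w \<notin> ?U"
      proof
        assume "inv w \<in> ?U"
        then have "inv (inv w) \<in> ?U" by (rule Uinv)
        then show False using wc wW(2) by simp
      qed
      ultimately show "inv w \<in> W'" unfolding W'_def by blast
    qed
    obtain T' where T': "T' \<subseteq> W'" "\<forall>t\<in>T'. inv t \<in> T'" "\<forall>x\<in>W'. \<exists>!t. t \<in> T' \<and> t \<in> H #> x"
      using less.hyps[OF lt W'1 W'2 W'3] by blast
    obtain T0 where T0: "T0 \<subseteq> ?U" "\<forall>t\<in>T0. inv t \<in> T0" "\<forall>x\<in>?U. \<exists>!t. t \<in> T0 \<and> t \<in> H #> x"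
      using piece[OF fin pow star g] by blast
    have A1: "T' \<union> T0 \<subseteq> W" using T'(1) T0(1) UW W'_def by blast
    have A2: "\<forall>t\<in>T' \<union> T0. inv t \<in> T' \<union> T0" using T'(2) T0(2) by blast
    have A3: "\<forall>x\<in>W. \<exists>!t. t \<in> T' \<union> T0 \<and> t \<in> H #> x"
    proof
      fix x assume xW: "x \<in> W"
      have xc: "x \<in> carrier G" using xW less.prems(1) by blast
      show "\<exists>!t. t \<in> T' \<union> T0 \<and> t \<in> H #> x"
      proof (cases "x \<in> ?U")
        case True
        have "\<exists>!t. t \<in> T0 \<and> t \<in> H #> x" using T0(3) True by blast
        then obtain t where t: "t \<in> T0 \<and> t \<in> H #> x" and u: "\<And>s. s \<in> T0 \<and> s \<in> H #> x \<Longrightarrow> s = t"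
          by (elim ex1E) blast
        show ?thesis
        proof (rule ex1I[of _ t])
          show "t \<in> T' \<union> T0 \<and> t \<in> H #> x" using t by blast
          fix s assume s: "s \<in> T' \<union> T0 \<and> s \<in> H #> x"
          have "s \<notin> T'"
          proof
            assume "s \<in> T'"
            then have "s \<notin> ?U" using T'(1) W'_def by blast
            moreover have "s \<in> ?U" using Urc[OF True] s by blast
            ultimately show False by simp
          qed
          then show "s = t" using u s by blast
        qed
      next
        case False
        then have xW': "x \<in> W'" using xW W'_def by blast
        have "\<exists>!t. t \<in> T' \<and> t \<in> H #> x" using T'(3) xW' by blast
        then obtain t where t: "t \<in> T' \<and> t \<in> H #> x" and u: "\<And>s. s \<in> T' \<and> s \<in> H #> x \<Longrightarrow> s = t"
          by (elim ex1E) blast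
        show ?thesis
        proof (rule ex1I[of _ t])
          show "t \<in> T' \<union> T0 \<and> t \<in> H #> x" using t by blast
          fix s assume s: "s \<in> T' \<union> T0 \<and> s \<in> H #> x"
          have "s \<notin> T0"
          proof
            assume "s \<in> T0"
            then have sU: "s \<in> ?U" using T0(1) by blast
            have "x \<in> H #> s" using rsym[OF xc] s by blast
            then have "x \<in> ?U" using Urc[OF sU] by blast
            then show False using False by simp
          qed
          then show "s = t" using u s by blast
        qed
      qed
    qed
    show ?thesis
      apply (rule exI[of _ "T' \<union> T0"])
      apply (intro conjI)
        apply (rule A1)
       apply (rule A2)
      apply (rule A3)
      done
  qed
qed

lemma transversal:
  assumes fin: "finite (carrier G)" and pow: "card H = 2 ^ k"
    and star: "\<forall>y\<in>carrier G. H #> y = y <# H \<and> y \<otimes> y \<in> H \<longrightarrow> (\<exists>t\<in>H #> y. t \<otimes> t = \<one>)"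
  shows "\<exists>T. T \<subseteq> carrier G \<and> (\<forall>t\<in>T. inv t \<in> T) \<and> (\<forall>x\<in>carrier G. \<exists>!t. t \<in> T \<and> t \<in> H #> x)"
  by (rule trans_W[OF fin pow star]) auto

lemma pc_from_T:
  assumes T: "T \<subseteq> carrier G" "\<forall>t\<in>T. inv t \<in> T" "\<forall>x\<in>carrier G. \<exists>!t. t \<in> T \<and> t \<in> H #> x"
  shows "subgroup_perfect_code G H"
proof -
  define S where "S = T - H"
  have cs: "cayley_connection_set G S"
    unfolding cayley_connection_set_def
  proof
    show "S \<subseteq> carrier G - {\<one>}" unfolding S_def using T(1) H1 by blast
    show "\<forall>s\<in>S. inv s \<in> S"
    proof
      fix s assume s: "s \<in> S"
      have sc: "s \<in> carrier G" using s T(1) S_def by blast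
      have "inv s \<in> T" using s T(2) S_def by blast
      moreover have "inv s \<notin> H"
      proof
        assume "inv s \<in> H"
        then have "inv (inv s) \<in> H" by simp
        then show False using sc s S_def by simp
      qed
      ultimately show "inv s \<in> S" unfolding S_def by blast
    qed
  qed
  have pc: "cayley_perfect_code G S H"
    unfolding cayley_perfect_code_def
  proof (intro conjI)
    show "H \<subseteq> carrier G" using subgroup.subset[OF subH] .
    show "\<forall>c1\<in>H. \<forall>c2\<in>H. c1 \<noteq> c2 \<longrightarrow> \<not> cayley_adj G S c1 c2"
    proof (intro ballI impI)
      fix c1 c2 assume c: "c1 \<in> H" "c2 \<in> H" "c1 \<noteq> c2"
      show "\<not> cayley_adj G S c1 c2"
      proof
        assume "cayley_adj G S c1 c2"
        then obtain s where s: "s \<in> S" "c2 = s \<otimes> c1" unfolding cayley_adj_def by blast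
        have sc: "s \<in> carrier G" using s T(1) S_def by blast
        have "s = c2 \<otimes> inv c1" using s(2) sc c by (simp add: m_assoc)
        then have "s \<in> H" using c by simp
        then show False using s(1) S_def by simp
      qed
    qed
    show "\<forall>v\<in>carrier G - H. \<exists>!c. c \<in> H \<and> cayley_adj G S v c"
    proof
      fix v assume v: "v \<in> carrier G - H"
      have vc: "v \<in> carrier G" using v by simp
      have ivc: "inv v \<in> carrier G" using vc by simp
      have "\<exists>!t. t \<in> T \<and> t \<in> H #> inv v" using T(3) ivc by blast
      then obtain t where t: "t \<in> T" "t \<in> H #> inv v" and u: "\<And>s. s \<in> T \<and> s \<in> H #> inv v \<Longrightarrow> s = t"
        by (elim ex1E) blast
      have tc: "t \<in> carrier G" using t(1) T(1) by blast
      have tv: "t \<otimes> v \<in> H" using t(2) rmem[OF ivc] vc by simp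
      have tH: "t \<notin> H"
      proof
        assume "t \<in> H"
        then have "inv t \<otimes> (t \<otimes> v) \<in> H" using tv by simp
        then show False using tc vc v by simp
      qed
      show "\<exists>!c. c \<in> H \<and> cayley_adj G S v c"
      proof (rule ex1I[of _ "t \<otimes> v"])
        show "t \<otimes> v \<in> H \<and> cayley_adj G S v (t \<otimes> v)"
          unfolding cayley_adj_def S_def using tv t(1) tH by blast
        fix c assume c: "c \<in> H \<and> cayley_adj G S v c"
        then obtain s where s: "s \<in> S" "c = s \<otimes> v" unfolding cayley_adj_def by blast
        have sc: "s \<in> carrier G" using s T(1) S_def by blast
        have "s \<in> H #> inv v" using rmem[OF ivc] sc s c vc by simp
        then have "s = t" using u s(1) S_def by blast
        then show "c = t \<otimes> v" using s(2) by simp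
      qed
    qed
  qed
  show ?thesis unfolding subgroup_perfect_code_def using cs pc by blast
qed

end



context group begin

lemma sq_nat: "x \<in> carrier G \<Longrightarrow> x [^] (2::nat) = x \<otimes> x"
  by (simp add: numeral_2_eq_2)

lemma sq_int: "x \<in> carrier G \<Longrightarrow> x [^] (2::int) = x \<otimes> x"
proof -
  assume x: "x \<in> carrier G"
  have "x [^] (2::int) = x [^] (1 + 1::int)" by simp
  also have "\<dots> = x [^] (1::int) \<otimes> x [^] (1::int)" by (rule int_pow_mult[OF x])
  finally show ?thesis using x by simp
qed

lemma conj_pow:
  assumes x: "x \<in> carrier G" and y: "y \<in> carrier G"
  shows "inv y \<otimes> x [^] (i::int) \<otimes> y = (inv y \<otimes> x \<otimes> y) [^] i"
proof -
  define phi where "phi u = inv y \<otimes> u \<otimes> y" for u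
  have hom: "phi \<in> hom G G"
  proof (rule homI)
    show "phi u \<in> carrier G" if "u \<in> carrier G" for u using that y unfolding phi_def by simp
    show "phi (u \<otimes> w) = phi u \<otimes> phi w" if "u \<in> carrier G" "w \<in> carrier G" for u w
      using that y unfolding phi_def by (simp add: m_assoc)
  qed
  have "phi (x [^] i) = phi x [^] i" using hom_int_pow[OF hom x is_group is_group] .
  then show ?thesis unfolding phi_def .
qed

end

context hg begin

lemma index2:
  assumes fin: "finite (carrier G)" and subK: "subgroup K G" and HK: "H \<subseteq> K"
    and cK: "card K = 2 * card H" and y: "y \<in> K" "y \<notin> H"
  shows "H #> y = K - H"
proof -
  have Kc: "K \<subseteq> carrier G" using subgroup.subset[OF subK] .
  have yc: "y \<in> carrier G" using y Kc by blast
  have sub: "H #> y \<subseteq> K - H"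
  proof
    fix z assume z: "z \<in> H #> y"
    then have zc: "z \<in> carrier G" and zh: "z \<otimes> inv y \<in> H" using rmem[OF yc] by auto
    have e: "z = (z \<otimes> inv y) \<otimes> y" using zc yc by (simp add: m_assoc)
    have "(z \<otimes> inv y) \<otimes> y \<in> K" using subgroup.m_closed[OF subK] zh HK y(1) by blast
    then have zK: "z \<in> K" using e by simp
    have "z \<notin> H"
    proof
      assume "z \<in> H"
      then have "inv (z \<otimes> inv y) \<otimes> z \<in> H" using zh by simp
      moreover have "inv (z \<otimes> inv y) \<otimes> z = y" using zc yc by (simp add: inv_mult_group m_assoc)
      ultimately show False using y(2) by simp
    qed
    then show "z \<in> K - H" using zK by simp
  qed
  have finK: "finite K" using fin Kc finite_subset by blast
  have "card (K - H) = card K - card H" using card_Diff_subset[OF finite_subset[OF HK finK] HK] .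
  then have "card (K - H) = card (H #> y)" using cK rcard[OF yc] by simp
  then show ?thesis using card_subset_eq[OF _ sub] finK by simp
qed

lemma sq_in:
  assumes fin: "finite (carrier G)" and subK: "subgroup K G" and HK: "H \<subseteq> K"
    and cK: "card K = 2 * card H" and y: "y \<in> K"
  shows "y \<otimes> y \<in> H"
proof (cases "y \<in> H")
  case True then show ?thesis by simp
next
  case False
  have yc: "y \<in> carrier G" using y subgroup.subset[OF subK] by blast
  have yy: "y \<otimes> y \<in> K" using subgroup.m_closed[OF subK y y] .
  show ?thesis
  proof (rule ccontr)
    assume "y \<otimes> y \<notin> H"
    then have "y \<otimes> y \<in> H #> y" using index2[OF fin subK HK cK y False] yy by simp
    then have "y \<otimes> y \<otimes> inv y \<in> H" using rmem[OF yc] by simp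
    then show False using yc False by (simp add: m_assoc)
  qed
qed

lemma ord_gen:
  assumes z: "z \<in> carrier G"
  shows "ord z = card (range (\<lambda>n::int. z [^] n))"
proof -
  have "generate G {z} = range (\<lambda>n::int. z [^] n)" using generate_pow[OF z] by auto
  then show ?thesis using generate_pow_card[OF z] by simp
qed

lemma cyc_inv:
  assumes fin: "finite (carrier G)" and subK: "subgroup K G" and HK: "H \<subseteq> K"
    and cK: "card K = 2 * card H" and pow: "card H = 2 ^ k" and k1: "k \<ge> 1"
    and cyc: "cyclic_group (subgroup_generated G K)" and t: "t \<in> K" "t \<otimes> t = \<one>"
  shows "t \<in> H"
proof -
  let ?Q = "subgroup_generated G K"
  have carQ: "carrier ?Q = K" using subgroup.carrier_subgroup_generated_subgroup[OF subK] .
  have gQ: "group ?Q" by simp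
  obtain z where z: "z \<in> carrier ?Q" "carrier ?Q = range (\<lambda>n::int. z [^]\<^bsub>?Q\<^esub> n)"
    using cyc group.cyclic_group[OF gQ] by blast
  have zK: "z \<in> K" using z(1) carQ by simp
  have zc: "z \<in> carrier G" using zK subgroup.subset[OF subK] by blast
  have pq: "z [^]\<^bsub>?Q\<^esub> (n::int) = z [^] n" for n using int_pow_subgroup_generated[OF z(1)] .
  have Kz: "K = range (\<lambda>n::int. z [^] n)" using z(2) carQ pq by simp
  have ordz: "ord z = 2 * 2 ^ k" using ord_gen[OF zc] Kz cK pow by simp
  obtain i :: int where ti: "t = z [^] i" using t(1) Kz by blast
  have e: "z [^] (i + i) = z [^] i \<otimes> z [^] i" by (rule int_pow_mult[OF zc])
  have "z [^] (i + i) = \<one>" unfolding e using t(2) ti by simp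
  then have "int (ord z) dvd (i + i)" using int_pow_eq_id[OF zc] by simp
  then have "2 * 2 ^ k dvd 2 * i" using ordz by simp
  then have "2 ^ k dvd i" by simp
  moreover have "(2::int) dvd 2 ^ k" using k1 by (simp add: dvd_power)
  ultimately have "2 dvd i" by (rule dvd_trans[rotated])
  then obtain m where m: "i = 2 * m" by blast
  have "t = (z [^] (2::int)) [^] m" using ti m int_pow_pow[OF zc] by simp
  also have "\<dots> = (z \<otimes> z) [^] m" using sq_int[OF zc] by simp
  finally have tm: "t = (z \<otimes> z) [^] m" .
  have "z \<otimes> z \<in> H" using sq_in[OF fin subK HK cK zK] .
  then show ?thesis using tm subgroup_int_pow_closed[OF subH] by simp
qed

end



context hg begin

lemma quat_inv:
  assumes fin: "finite (carrier G)" and subK: "subgroup K G" and HK: "H \<subseteq> K"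
    and cK: "card K = 2 * card H"
    and quat: "gen_quaternion_group (subgroup_generated G K)" and t: "t \<in> K" "t \<otimes> t = \<one>"
  shows "t \<in> H"
proof -
  let ?Q = "subgroup_generated G K"
  have carQ: "carrier ?Q = K" using subgroup.carrier_subgroup_generated_subgroup[OF subK] .
  have Kc: "K \<subseteq> carrier G" using subgroup.subset[OF subK] .
  obtain n x y where n3: "n \<ge> 3" and cardQ: "card (carrier ?Q) = 2 ^ n"
    and xy: "x \<in> carrier ?Q" "y \<in> carrier ?Q" and gen: "generate ?Q {x, y} = carrier ?Q"
    and xp: "x [^]\<^bsub>?Q\<^esub> ((2::nat) ^ (n - 1)) = \<one>\<^bsub>?Q\<^esub>"
    and yp: "y [^]\<^bsub>?Q\<^esub> (2::nat) = x [^]\<^bsub>?Q\<^esub> ((2::nat) ^ (n - 2))"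
    and rel: "inv\<^bsub>?Q\<^esub> y \<otimes>\<^bsub>?Q\<^esub> x \<otimes>\<^bsub>?Q\<^esub> y = inv\<^bsub>?Q\<^esub> x"
    using quat unfolding gen_quaternion_group_def by blast
  have xK: "x \<in> K" and yK: "y \<in> K" using xy carQ by simp_all
  have xc: "x \<in> carrier G" and yc: "y \<in> carrier G" using xK yK Kc by blast+
  define M where "M = (2::nat) ^ (n - 2)"
  have xp': "x [^] ((2::nat) ^ (n - 1)) = \<one>" using xp by (simp add: pow_subgroup_generated)
  have "y \<otimes> y = x [^] M"
    using yp sq_nat[OF yc] unfolding M_def by (simp add: pow_subgroup_generated)
  then have yy: "y \<otimes> y = x [^] (int M)" by (simp only: int_pow_int)
  have rel': "inv y \<otimes> x \<otimes> y = inv x" using rel xy by simp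
  have conj: "inv y \<otimes> x [^] (j::int) \<otimes> y = x [^] (- j)" for j
    using conj_pow[OF xc yc, of j] rel' int_pow_inv[OF xc] int_pow_neg[OF xc] by simp
  have swap: "y \<otimes> x [^] (j::int) = x [^] (- j) \<otimes> y" for j
  proof -
    have "y \<otimes> x [^] j = y \<otimes> (inv y \<otimes> x [^] (- j) \<otimes> y)" using conj[of "- j"] by simp
    also have "\<dots> = x [^] (- j) \<otimes> y" using xc yc by (simp add: m_assoc)
    finally show ?thesis .
  qed
  have QK: "?Q = G\<lparr>carrier := K\<rparr>"
  proof -
    have "generate G (carrier G \<inter> K) = K" using carQ by (simp add: carrier_subgroup_generated)
    then show ?thesis unfolding subgroup_generated_def by simp
  qed
  have KG: "K = generate G {x, y}"
    using gen carQ generate_consistent[of "{x, y}" K] xK yK subK unfolding QK by simp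
  define P where "P u = (\<exists>i::int. u = x [^] i \<or> u = x [^] i \<otimes> y)" for u
  have elems: "P u" if "u \<in> generate G {x, y}" for u
    using that
  proof (induction rule: generate.induct)
    case one
    show ?case unfolding P_def by (rule exI[of _ 0]) simp
  next
    case (incl h)
    then consider "h = x" | "h = y" by blast
    then show ?case
    proof cases
      case 1 then show ?thesis unfolding P_def by (intro exI[of _ 1]) (use xc in simp)
    next
      case 2 then show ?thesis unfolding P_def by (intro exI[of _ 0]) (use yc in simp)
    qed
  next
    case (inv h)
    then consider "h = x" | "h = y" by blast
    then show ?case
    proof cases
      case 1 then show ?thesis unfolding P_def by (intro exI[of _ "-1"]) (use xc int_pow_neg[OF xc, of 1] in simp)
    next
      case 2
      have "x [^] (- int M) \<otimes> y = inv (y \<otimes> y) \<otimes> y" using yy int_pow_neg[OF xc] by simp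
      also have "\<dots> = inv y" using yc by (simp add: inv_mult_group m_assoc)
      finally show ?thesis unfolding P_def using 2 by (intro exI[of _ "- int M"]) simp
    qed
  next
    case (eng h1 h2)
    obtain i :: int where i: "h1 = x [^] i \<or> h1 = x [^] i \<otimes> y" using eng.IH(1) unfolding P_def by blast
    obtain j :: int where j: "h2 = x [^] j \<or> h2 = x [^] j \<otimes> y" using eng.IH(2) unfolding P_def by blast
    have xi: "x [^] (i::int) \<in> carrier G" for i using xc by simp
    have m1: "x [^] i \<otimes> x [^] j = x [^] (i + j)" using int_pow_mult[OF xc] by simp
    have m2: "x [^] i \<otimes> (x [^] j \<otimes> y) = x [^] (i + j) \<otimes> y"
      using int_pow_mult[OF xc] xc yc by (simp add: m_assoc)
    have m3: "x [^] i \<otimes> y \<otimes> x [^] j = x [^] (i + - j) \<otimes> y"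
    proof -
      have "x [^] i \<otimes> y \<otimes> x [^] j = x [^] i \<otimes> (y \<otimes> x [^] j)" using xc yc by (simp add: m_assoc)
      also have "\<dots> = x [^] i \<otimes> (x [^] (- j) \<otimes> y)" using swap by simp
      also have "\<dots> = x [^] (i + - j) \<otimes> y" using int_pow_mult[OF xc, of i "- j"] xc yc by (simp add: m_assoc)
      finally show ?thesis .
    qed
    have m4: "x [^] i \<otimes> y \<otimes> (x [^] j \<otimes> y) = x [^] (i + - j + int M)"
    proof -
      have "x [^] i \<otimes> y \<otimes> (x [^] j \<otimes> y) = x [^] i \<otimes> (y \<otimes> x [^] j) \<otimes> y" using xc yc by (simp add: m_assoc)
      also have "\<dots> = x [^] i \<otimes> (x [^] (- j) \<otimes> y) \<otimes> y" using swap by simp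
      also have "\<dots> = x [^] (i + - j) \<otimes> (y \<otimes> y)" using int_pow_mult[OF xc, of i "- j"] xc yc by (simp add: m_assoc)
      also have "\<dots> = x [^] (i + - j + int M)" using yy int_pow_mult[OF xc, of "i + - j" "int M"] by simp
      finally show ?thesis .
    qed
    show ?case using i j m1 m2 m3 m4 unfolding P_def by blast
  qed
  define Hx where "Hx = range (\<lambda>i::int. x [^] i)"
  have subHx: "subgroup Hx G" unfolding Hx_def using subgroup_of_powers[OF xc] .
  have cHx: "card Hx = ord x" unfolding Hx_def using ord_gen[OF xc] by simp
  have finHx: "finite Hx" using fin subgroup.subset[OF subHx] finite_subset by blast
  have KU: "K \<subseteq> Hx \<union> (Hx #> y)"
  proof
    fix u assume "u \<in> K"
    then have "P u" using elems KG by simp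
    then obtain i :: int where "u = x [^] i \<or> u = x [^] i \<otimes> y" unfolding P_def by blast
    then show "u \<in> Hx \<union> (Hx #> y)" unfolding Hx_def r_coset_def by blast
  qed
  have "card K \<le> card (Hx \<union> (Hx #> y))"
    using card_mono[OF _ KU] finHx rc_sub[OF subHx yc] fin finite_subset by blast
  also have "\<dots> \<le> card Hx + card (Hx #> y)" by (rule card_Un_le)
  also have "\<dots> = 2 * ord x" using rc_card[OF subHx yc] cHx by simp
  finally have le: "2 ^ n \<le> 2 * ord x" using cardQ carQ by simp
  have odvd: "ord x dvd 2 ^ (n - 1)" using xp' pow_eq_id[OF xc] by simp
  have n1: "(2::nat) ^ n = 2 * 2 ^ (n - 1)"
  proof -
    have "n = Suc (n - 1)" using n3 by simp
    then show ?thesis by (metis power_Suc)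
  qed
  have ox: "ord x = 2 ^ (n - 1)"
  proof -
    have "ord x \<le> 2 ^ (n - 1)" using dvd_imp_le[OF odvd] by simp
    moreover have "2 ^ (n - 1) \<le> ord x" using le n1 by simp
    ultimately show ?thesis by simp
  qed
  have n2: "(2::nat) ^ (n - 1) = 2 * 2 ^ (n - 2)"
  proof -
    have "n - 1 = Suc (n - 2)" using n3 by simp
    then show ?thesis by simp
  qed
  have "P t" using elems KG t(1) by simp
  then obtain i :: int where ti: "t = x [^] i \<or> t = x [^] i \<otimes> y" unfolding P_def by blast
  then show ?thesis
  proof
    assume ti: "t = x [^] i"
    have e: "x [^] (i + i) = x [^] i \<otimes> x [^] i" by (rule int_pow_mult[OF xc])
    have "x [^] (i + i) = \<one>" unfolding e using t(2) ti by simp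
    then have "int (ord x) dvd (i + i)" using int_pow_eq_id[OF xc] by simp
    then have "int (ord x) dvd 2 * i" by simp
    moreover have "int (ord x) = 2 * 2 ^ (n - 2)" using ox n2 by simp
    ultimately have "2 * 2 ^ (n - 2) dvd 2 * i" by simp
    then have d: "2 ^ (n - 2) dvd i" by simp
    have "(2::int) dvd 2 ^ (n - 2)" using n3 by (simp add: dvd_power)
    then have "2 dvd i" using d by (rule dvd_trans)
    then obtain m where m: "i = 2 * m" by blast
    have "t = (x [^] (2::int)) [^] m" using ti m int_pow_pow[OF xc] by simp
    also have "\<dots> = (x \<otimes> x) [^] m" using sq_int[OF xc] by simp
    finally have tm: "t = (x \<otimes> x) [^] m" .
    have "x \<otimes> x \<in> H" using sq_in[OF fin subK HK cK xK] .
    then show ?thesis using tm subgroup_int_pow_closed[OF subH] by simp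
  next
    assume ti: "t = x [^] i \<otimes> y"
    have "t \<otimes> t = x [^] (i + - i + int M)"
    proof -
      have "t \<otimes> t = x [^] i \<otimes> (y \<otimes> x [^] i) \<otimes> y" using ti xc yc by (simp add: m_assoc)
      also have "\<dots> = x [^] i \<otimes> (x [^] (- i) \<otimes> y) \<otimes> y" using swap by simp
      also have "\<dots> = x [^] (i + - i) \<otimes> (y \<otimes> y)" using int_pow_mult[OF xc, of i "- i"] xc yc by (simp add: m_assoc)
      also have "\<dots> = x [^] (i + - i + int M)" using yy int_pow_mult[OF xc, of "i + - i" "int M"] by simp
      finally show ?thesis .
    qed
    then have "x [^] (int M) = \<one>" using t(2) by simp
    then have "int (ord x) dvd int M" using int_pow_eq_id[OF xc] by simp
    then have "ord x dvd M" by simp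
    then have "2 * 2 ^ (n - 2) dvd (2::nat) ^ (n - 2)" using ox n2 unfolding M_def by simp
    then have "2 * 2 ^ (n - 2) \<le> (2::nat) ^ (n - 2)" by (rule dvd_imp_le) simp
    then show ?thesis by simp
  qed
qed

end



lemma nt_lemma:
  fixes r s :: int and k :: nat
  assumes k1: "k \<ge> 1" and noinv: "\<forall>i. \<not> (2::int) ^ k dvd (i + s + r * i)"
    and com: "(2::int) ^ k dvd (r * s - s)"
  shows "odd s \<or> (k \<ge> 2 \<and> (2::int) ^ k dvd (1 + r) \<and> (2::int) ^ (k - 1) dvd s \<and> \<not> (2::int) ^ k dvd s)"
proof (cases "odd s")
  case True
  then show ?thesis by simp
next
  case False
  then have es: "even s" by simp
  define N where "N = (2::int) ^ k"
  define d where "d = gcd (1 + r) N"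
  have nd: "\<not> d dvd s"
  proof
    assume "d dvd s"
    then obtain c where c: "s = d * c" by blast
    obtain u v where uv: "u * (1 + r) + v * N = d" using bezout_int[of "1 + r" N] unfolding d_def by blast
    have "(- (u * c)) + s + r * (- (u * c)) = s - c * (u * (1 + r))" by (simp add: algebra_simps)
    also have "\<dots> = d * c - c * (d - v * N)"
    proof -
      have e: "u * (1 + r) = d - v * N" using uv by linarith
      show ?thesis unfolding e using c by simp
    qed
    also have "\<dots> = N * (v * c)" by (simp add: algebra_simps)
    finally have "N dvd (- (u * c)) + s + r * (- (u * c))" by simp
    then show False using noinv unfolding N_def by blast
  qed
  have dN: "d dvd 2 ^ k" unfolding d_def N_def by simp
  have p2: "normalization_semidom_class.prime (2::int)" by simp
  obtain m where m: "m \<le> k" "normalize d = 2 ^ m" using divides_primepow[OF p2 dN] by blast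
  have dm: "d = 2 ^ m" using m(2) unfolding d_def by simp
  have m2: "m \<ge> 2"
  proof (rule ccontr)
    assume "\<not> m \<ge> 2"
    then have "m = 0 \<or> m = 1" by auto
    then have "d dvd s" using dm es by auto
    then show False using nd by simp
  qed
  have "(4::int) dvd 2 ^ m"
  proof -
    have "(2::int) ^ 2 dvd 2 ^ m" using m2 by (rule le_imp_power_dvd)
    then show ?thesis by simp
  qed
  moreover have "d dvd 1 + r" unfolding d_def by simp
  ultimately have "4 dvd 1 + r" using dm by (metis dvd_trans)
  then obtain q where q: "1 + r = 4 * q" by blast
  have rs: "r * s - s = (2 * q - 1) * (2 * s)"
  proof -
    have e1: "r * s - s = (r - 1) * s" by (simp add: algebra_simps)
    have e2: "r - 1 = 2 * (2 * q - 1)" using q by presburger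
    show ?thesis unfolding e1 e2 by (simp add: algebra_simps)
  qed
  have "coprime (2 * q - 1) 2" by simp
  then have cop: "coprime N (2 * q - 1)" unfolding N_def by (simp add: coprime_commute)
  have "N dvd (2 * q - 1) * (2 * s)" using com rs unfolding N_def by simp
  then have N2s: "N dvd 2 * s" using coprime_dvd_mult_right_iff[OF cop] by simp
  have Ns: "\<not> N dvd s" using noinv[rule_format, of 0] unfolding N_def by simp
  have kk: "N = 2 * 2 ^ (k - 1)"
  proof -
    have "k = Suc (k - 1)" using k1 by simp
    then show ?thesis unfolding N_def by (metis power_Suc)
  qed
  have hs: "(2::int) ^ (k - 1) dvd s" using N2s kk by simp
  have mk: "m = k"
  proof (rule ccontr)
    assume "m \<noteq> k"
    then have "m \<le> k - 1" using m(1) by simp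
    then have "(2::int) ^ m dvd 2 ^ (k - 1)" by (rule le_imp_power_dvd)
    then have "d dvd s" using dm hs by (metis dvd_trans)
    then show False using nd by simp
  qed
  have "N dvd 1 + r" using dm mk \<open>d dvd 1 + r\<close> unfolding N_def by simp
  then show ?thesis using m2 mk hs Ns unfolding N_def by simp
qed

context hg begin

lemma dir1:
  assumes fin: "finite (carrier G)" and pow: "card H = 2 ^ k" and k1: "k \<ge> 1"
    and pc: "subgroup_perfect_code G H"
  shows "\<not> (\<exists>K. subgroup K G \<and> H \<subseteq> K \<and> card K = 2 * card H \<and>
          (cyclic_group (subgroup_generated G K) \<or> gen_quaternion_group (subgroup_generated G K)))"
proof
  assume "\<exists>K. subgroup K G \<and> H \<subseteq> K \<and> card K = 2 * card H \<and>
          (cyclic_group (subgroup_generated G K) \<or> gen_quaternion_group (subgroup_generated G K))"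
  then obtain K where subK: "subgroup K G" and HK: "H \<subseteq> K" and cK: "card K = 2 * card H"
    and cq: "cyclic_group (subgroup_generated G K) \<or> gen_quaternion_group (subgroup_generated G K)"
    by blast
  have invol: "t \<in> H" if tK: "t \<in> K" "t \<otimes> t = \<one>" for t
    using cq cyc_inv[OF fin subK HK cK pow k1 _ tK] quat_inv[OF fin subK HK cK _ tK] by blast
  from pc obtain S where cs: "cayley_connection_set G S" and pcS: "cayley_perfect_code G S H"
    unfolding subgroup_perfect_code_def by blast
  have Sc: "S \<subseteq> carrier G - {\<one>}" and Si: "\<forall>s\<in>S. inv s \<in> S"
    using cs unfolding cayley_connection_set_def by auto
  have uniq: "\<forall>v\<in>carrier G - H. \<exists>!c. c \<in> H \<and> cayley_adj G S v c"
    using pcS unfolding cayley_perfect_code_def by blast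
  have Kc: "K \<subseteq> carrier G" using subgroup.subset[OF subK] .
  have "H \<noteq> {}" using H1 by blast
  then have "card H > 0" using finH[OF fin] by (simp add: card_gt_0_iff)
  then have "card H < card K" using cK by simp
  then have "\<not> K \<subseteq> H" using card_mono[OF finH[OF fin]] by (meson leD)
  then obtain y where y: "y \<in> K" "y \<notin> H" by blast
  have yc: "y \<in> carrier G" using y Kc by blast
  define v where "v = inv y"
  have vc: "v \<in> carrier G" unfolding v_def using yc by simp
  have vH: "v \<notin> H"
  proof
    assume "v \<in> H"
    then have "inv v \<in> H" by simp
    then show False using y(2) yc unfolding v_def by simp
  qed
  have "\<exists>!c. c \<in> H \<and> cayley_adj G S v c" using uniq vc vH by blast
  then obtain c where c: "c \<in> H \<and> cayley_adj G S v c"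
    and cu: "\<And>c'. c' \<in> H \<and> cayley_adj G S v c' \<Longrightarrow> c' = c"
    by (elim ex1E) blast
  obtain s where s: "s \<in> S" "c = s \<otimes> v" using c unfolding cayley_adj_def by blast
  have sc: "s \<in> carrier G" using s(1) Sc by blast
  have sy: "s = c \<otimes> y" using s(2) sc yc unfolding v_def by (simp add: m_assoc)
  have cK': "c \<in> K" using c HK by blast
  have sK: "s \<in> K" using sy subgroup.m_closed[OF subK cK' y(1)] by simp
  have sH: "s \<notin> H"
  proof
    assume "s \<in> H"
    then have "inv c \<otimes> s \<in> H" using c by simp
    moreover have "inv c \<otimes> s = y" using sy c yc by simp
    ultimately show False using y(2) by simp
  qed
  have isS: "inv s \<in> S" using Si s(1) by blast
  have isK: "inv s \<in> K" using subgroup.m_inv_closed[OF subK sK] .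
  have isH: "inv s \<notin> H"
  proof
    assume "inv s \<in> H"
    then have "inv (inv s) \<in> H" by simp
    then show False using sH sc by simp
  qed
  have "inv s \<in> H #> y" using index2[OF fin subK HK cK y] isK isH by simp
  then have c'H: "inv s \<otimes> v \<in> H" using rmem[OF yc] unfolding v_def by simp
  have "cayley_adj G S v (inv s \<otimes> v)" unfolding cayley_adj_def using isS by blast
  then have "inv s \<otimes> v = c" using cu c'H by blast
  then have "inv s \<otimes> v = s \<otimes> v" using s(2) by simp
  then have iss: "inv s = s" using sc vc by simp
  have "s \<otimes> inv s = \<one>" using sc by simp
  then have "s \<otimes> s = \<one>" using iss by simp
  then have "s \<in> H" using invol sK by blast
  then show False using sH by simp
qed

end



context hg begin

lemma star_lemma:
  assumes fin: "finite (carrier G)" and pow: "card H = 2 ^ k" and k1: "k \<ge> 1"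
    and cycH: "cyclic_group (subgroup_generated G H)"
    and noK: "\<not> (\<exists>K. subgroup K G \<and> H \<subseteq> K \<and> card K = 2 * card H \<and>
          (cyclic_group (subgroup_generated G K) \<or> gen_quaternion_group (subgroup_generated G K)))"
  shows "\<forall>y\<in>carrier G. H #> y = y <# H \<and> y \<otimes> y \<in> H \<longrightarrow> (\<exists>t\<in>H #> y. t \<otimes> t = \<one>)"
proof (intro ballI impI)
  fix y assume yc: "y \<in> carrier G" and hy: "H #> y = y <# H \<and> y \<otimes> y \<in> H"
  have hl: "H #> y = y <# H" and yy: "y \<otimes> y \<in> H" using hy by auto
  show "\<exists>t\<in>H #> y. t \<otimes> t = \<one>"
  proof (cases "y \<in> H")
    case True
    have "\<one> \<in> H #> y" using rmem[OF yc] True by simp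
    then show ?thesis by force
  next
    case False
    show ?thesis
    proof (rule ccontr)
      assume noinv: "\<not> (\<exists>t\<in>H #> y. t \<otimes> t = \<one>)"
      have lmem: "z \<in> y <# H \<longleftrightarrow> z \<in> carrier G \<and> inv y \<otimes> z \<in> H" for z
      proof
        assume "z \<in> y <# H"
        then obtain h where h: "h \<in> H" "z = y \<otimes> h" unfolding l_coset_def by blast
        then show "z \<in> carrier G \<and> inv y \<otimes> z \<in> H" using yc by simp
      next
        assume a: "z \<in> carrier G \<and> inv y \<otimes> z \<in> H"
        have "y \<otimes> (inv y \<otimes> z) = z" using a yc by simp
        then show "z \<in> y <# H" using a unfolding l_coset_def by (metis UN_iff singletonI)
      qed
      have cj1: "y \<otimes> h \<otimes> inv y \<in> H" if h: "h \<in> H" for h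
      proof -
        have "y \<otimes> h \<in> y <# H" using lmem h yc by simp
        then have "y \<otimes> h \<in> H #> y" using hl by simp
        then show ?thesis using rmem[OF yc] by simp
      qed
      have rm: "z \<in> H #> y \<longleftrightarrow> z \<in> carrier G \<and> z \<otimes> inv y \<in> H" for z using rmem[OF yc] .
      define K where "K = H \<union> (H #> y)"
      have Kc: "K \<subseteq> carrier G" unfolding K_def using rsub[OF yc] by auto
      have mulK: "a \<otimes> b \<in> K" if ab: "a \<in> K" "b \<in> K" for a b
      proof -
        have ac: "a \<in> carrier G" and bc: "b \<in> carrier G" using ab Kc by auto
        consider (HH) "a \<in> H" "b \<in> H" | (HY) "a \<in> H" "b \<in> H #> y" | (YH) "a \<in> H #> y" "b \<in> H"
          | (YY) "a \<in> H #> y" "b \<in> H #> y" using ab unfolding K_def by blast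
        then show ?thesis
        proof cases
          case HH then show ?thesis unfolding K_def by simp
        next
          case HY
          have "a \<otimes> b \<otimes> inv y = a \<otimes> (b \<otimes> inv y)" using ac bc yc by (simp add: m_assoc)
          moreover have "b \<otimes> inv y \<in> H" using HY rm by simp
          ultimately have "a \<otimes> b \<otimes> inv y \<in> H" using HY by simp
          then show ?thesis unfolding K_def using rm ac bc by simp
        next
          case YH
          have "a \<otimes> b \<otimes> inv y = (a \<otimes> inv y) \<otimes> (y \<otimes> b \<otimes> inv y)" using ac bc yc by (simp add: m_assoc)
          moreover have "a \<otimes> inv y \<in> H" using YH rm by simp
          moreover have "y \<otimes> b \<otimes> inv y \<in> H" using cj1 YH by simp
          ultimately have "a \<otimes> b \<otimes> inv y \<in> H" by simp
          then show ?thesis unfolding K_def using rm ac bc by simp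
        next
          case YY
          have hb: "b \<otimes> inv y \<in> H" and ha: "a \<otimes> inv y \<in> H" using YY rm by simp_all
          have "a \<otimes> b = (a \<otimes> inv y) \<otimes> (y \<otimes> (b \<otimes> inv y) \<otimes> inv y) \<otimes> (y \<otimes> y)"
            using ac bc yc by (simp add: m_assoc)
          moreover have "y \<otimes> (b \<otimes> inv y) \<otimes> inv y \<in> H" using cj1[OF hb] .
          ultimately have "a \<otimes> b \<in> H" using ha yy by simp
          then show ?thesis unfolding K_def by simp
        qed
      qed
      have invK: "inv a \<in> K" if aK: "a \<in> K" for a
      proof -
        have ac: "a \<in> carrier G" using aK Kc by auto
        show ?thesis
        proof (cases "a \<in> H")
          case True then show ?thesis unfolding K_def by simp
        next
          case False
          then have aY: "a \<in> H #> y" using aK unfolding K_def by simp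
          have ha: "a \<otimes> inv y \<in> H" using aY rm by simp
          have "y \<otimes> a = (y \<otimes> (a \<otimes> inv y) \<otimes> inv y) \<otimes> (y \<otimes> y)" using ac yc by (simp add: m_assoc)
          moreover have "y \<otimes> (a \<otimes> inv y) \<otimes> inv y \<in> H" using cj1[OF ha] .
          ultimately have "y \<otimes> a \<in> H" using yy by simp
          then have "inv (y \<otimes> a) \<in> H" by simp
          then have "inv a \<otimes> inv y \<in> H" using ac yc by (simp add: inv_mult_group)
          then show ?thesis unfolding K_def using rm ac by simp
        qed
      qed
      have subK: "subgroup K G"
      proof (rule subgroupI)
        show "K \<subseteq> carrier G" by (rule Kc)
        show "K \<noteq> {}" unfolding K_def using H1 by blast
      qed (use mulK invK in auto)
      have HK: "H \<subseteq> K" unfolding K_def by simp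
      have disj: "H \<inter> (H #> y) = {}"
      proof (rule ccontr)
        assume "H \<inter> (H #> y) \<noteq> {}"
        then obtain z where z: "z \<in> H" "z \<in> H #> y" by blast
        have zc: "z \<in> carrier G" using z by simp
        have "z \<otimes> inv y \<in> H" using z rm by simp
        then have "inv z \<otimes> (z \<otimes> inv y) \<in> H" using z by simp
        then have "inv y \<in> H" using zc yc by simp
        then have "inv (inv y) \<in> H" by simp
        then show False using False yc by simp
      qed
      have finH': "finite H" using finH[OF fin] .
      have finY: "finite (H #> y)" using fin rsub[OF yc] finite_subset by blast
      have cK: "card K = 2 * card H" unfolding K_def
        using card_Un_disjoint[OF finH' finY disj] rcard[OF yc] by simp
      have notcq: "\<not> cyclic_group (subgroup_generated G K)" "\<not> gen_quaternion_group (subgroup_generated G K)"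
        using noK subK HK cK by blast+
      have gH: "group (subgroup_generated G H)" by simp
      have carH: "carrier (subgroup_generated G H) = H" using subgroup.carrier_subgroup_generated_subgroup[OF subH] .
      obtain a where a: "a \<in> carrier (subgroup_generated G H)"
        "carrier (subgroup_generated G H) = range (\<lambda>n::int. a [^]\<^bsub>subgroup_generated G H\<^esub> n)"
        using cycH group.cyclic_group[OF gH] by blast
      have aH: "a \<in> H" using a(1) carH by simp
      have ac: "a \<in> carrier G" using aH by simp
      have pq: "a [^]\<^bsub>subgroup_generated G H\<^esub> (n::int) = a [^] n" for n using int_pow_subgroup_generated[OF a(1)] .
      have Ha: "H = range (\<lambda>n::int. a [^] n)" using a(2) carH pq by simp
      have orda: "ord a = 2 ^ k" using ord_gen[OF ac] Ha pow by simp
      have ordI: "a [^] (i::int) = \<one> \<longleftrightarrow> (2::int) ^ k dvd i" for i using int_pow_eq_id[OF ac] orda by simp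
      have ordE: "a [^] (i::int) = a [^] (j::int) \<longleftrightarrow> (2::int) ^ k dvd (j - i)" for i j using int_pow_eq[OF ac] orda by simp
      have "inv y \<otimes> a \<otimes> y \<in> H"
      proof -
        have "a \<otimes> y \<in> H #> y" using rm aH ac yc by (simp add: m_assoc)
        then have "a \<otimes> y \<in> y <# H" using hl by simp
        then have "inv y \<otimes> (a \<otimes> y) \<in> H" using lmem by simp
        then show ?thesis using ac yc by (simp add: m_assoc)
      qed
      then obtain r :: int where r: "inv y \<otimes> a \<otimes> y = a [^] r" using Ha by blast
      obtain s :: int where s: "y \<otimes> y = a [^] s" using yy Ha by blast
      have conjr: "inv y \<otimes> a [^] (i::int) \<otimes> y = a [^] (r * i)" for i
        using conj_pow[OF ac yc, of i] r int_pow_pow[OF ac] by simp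
      have sqr: "(a [^] i \<otimes> y) \<otimes> (a [^] i \<otimes> y) = a [^] (i + s + r * i)" for i :: int
      proof -
        have "(a [^] i \<otimes> y) \<otimes> (a [^] i \<otimes> y) = a [^] i \<otimes> (y \<otimes> y) \<otimes> (inv y \<otimes> a [^] i \<otimes> y)"
          using ac yc by (simp add: m_assoc)
        also have "\<dots> = a [^] i \<otimes> a [^] s \<otimes> a [^] (r * i)" using s conjr by simp
        also have "\<dots> = a [^] (i + s + r * i)" using int_pow_mult[OF ac] by simp
        finally show ?thesis .
      qed
      have nodiv: "\<forall>i. \<not> (2::int) ^ k dvd (i + s + r * i)"
      proof (intro allI notI)
        fix i :: int assume d: "(2::int) ^ k dvd (i + s + r * i)"
        have "a [^] i \<in> H" using Ha by blast
        then have "a [^] i \<otimes> y \<in> H #> y" using rm ac yc by (simp add: m_assoc)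
        moreover have "(a [^] i \<otimes> y) \<otimes> (a [^] i \<otimes> y) = \<one>" using sqr ordI d by simp
        ultimately show False using noinv by blast
      qed
      have com: "(2::int) ^ k dvd (r * s - s)"
      proof -
        have "inv y \<otimes> (y \<otimes> y) \<otimes> y = y \<otimes> y" using yc by (simp add: m_assoc)
        then have "a [^] (r * s) = a [^] s" using conjr[of s] s by simp
        then have "(2::int) ^ k dvd (s - r * s)" using ordE by simp
        then show ?thesis by (simp add: dvd_diff_commute)
      qed
      have yK: "y \<in> K" unfolding K_def using rself[OF yc] by simp
      have carK: "carrier (subgroup_generated G K) = K" using subgroup.carrier_subgroup_generated_subgroup[OF subK] .
      have gK: "group (subgroup_generated G K)" by simp
      have Kform: "z \<in> K \<Longrightarrow> \<exists>i::int. z = a [^] i \<or> z = a [^] i \<otimes> y" for z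
      proof -
        assume z: "z \<in> K"
        show ?thesis
        proof (cases "z \<in> H")
          case True then show ?thesis using Ha by blast
        next
          case False
          then have "z \<in> H #> y" using z unfolding K_def by simp
          then have zc: "z \<in> carrier G" and "z \<otimes> inv y \<in> H" using rm by simp_all
          then obtain i :: int where i: "z \<otimes> inv y = a [^] i" using Ha by blast
          have "z = a [^] i \<otimes> y" using i[symmetric] zc yc by (simp add: m_assoc)
          then show ?thesis by blast
        qed
      qed
      from nt_lemma[OF k1 nodiv com] show False
      proof
        assume so: "odd s"
        have "coprime s 2" using so by simp
        then have "coprime s ((2::int) ^ k)" by simp
        then have "gcd s ((2::int) ^ k) = 1" by simp
        then obtain u v :: int where uv: "u * s + v * 2 ^ k = 1" using bezout_int[of s "2 ^ k"] by auto
        have "a [^] (1::int) = a [^] (u * s)" using ordE uv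
        proof -
          have "u * s - 1 = 2 ^ k * (- v)" using uv by (simp add: algebra_simps)
          then show ?thesis using ordE by simp
        qed
        also have "\<dots> = (a [^] s) [^] u" using int_pow_pow[OF ac] by (simp add: mult.commute)
        also have "\<dots> = (y [^] (2::int)) [^] u" using s sq_int[OF yc] by simp
        also have "\<dots> = y [^] (2 * u)" using int_pow_pow[OF yc] by simp
        finally have ay: "a = y [^] (2 * u)" using ac by simp
        have "K = range (\<lambda>n::int. y [^] n)"
        proof
          show "range (\<lambda>n::int. y [^] n) \<subseteq> K" using subgroup_int_pow_closed[OF subK yK] by blast
          show "K \<subseteq> range (\<lambda>n::int. y [^] n)"
          proof
            fix z assume "z \<in> K"
            then obtain i :: int where i: "z = a [^] i \<or> z = a [^] i \<otimes> y" using Kform by blast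
            have ai: "a [^] i = y [^] (2 * u * i)" using ay int_pow_pow[OF yc] by simp
            show "z \<in> range (\<lambda>n::int. y [^] n)"
            proof (cases "z = a [^] i")
              case True then show ?thesis using ai by simp
            next
              case False
              then have "z = y [^] (2 * u * i) \<otimes> y [^] (1::int)" using i ai yc by simp
              also have "\<dots> = y [^] (2 * u * i + 1)" using int_pow_mult[OF yc] by simp
              finally show ?thesis by simp
            qed
          qed
        qed
        then have "cyclic_group (subgroup_generated G K)"
          unfolding group.cyclic_group[OF gK] carK
          using yK int_pow_subgroup_generated[of y K] carK by (intro bexI[of _ y]) simp_all
        then show False using notcq by simp
      next
        assume q: "k \<ge> 2 \<and> (2::int) ^ k dvd (1 + r) \<and> (2::int) ^ (k - 1) dvd s \<and> \<not> (2::int) ^ k dvd s"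
        let ?Q = "subgroup_generated G K"
        have QK: "?Q = G\<lparr>carrier := K\<rparr>"
        proof -
          have "generate G (carrier G \<inter> K) = K" using carK by (simp add: carrier_subgroup_generated)
          then show ?thesis unfolding subgroup_generated_def by simp
        qed
        have aK: "a \<in> K" using aH HK by blast
        have genK: "generate G {a, y} = K"
        proof
          show "generate G {a, y} \<subseteq> K" using generate_subgroup_incl[OF _ subK] aK yK by simp
          show "K \<subseteq> generate G {a, y}"
          proof
            fix z assume "z \<in> K"
            then obtain i :: int where i: "z = a [^] i \<or> z = a [^] i \<otimes> y" using Kform by blast
            have sg: "subgroup (generate G {a, y}) G" using generate_is_subgroup ac yc by simp
            have "a \<in> generate G {a, y}" by (rule generate.incl) simp
            then have ai: "a [^] i \<in> generate G {a, y}" using subgroup_int_pow_closed[OF sg] by simp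
            have "y \<in> generate G {a, y}" by (rule generate.incl) simp
            then have "a [^] i \<otimes> y \<in> generate G {a, y}" using ai by (rule generate.eng[rotated])
            then show "z \<in> generate G {a, y}" using i ai by blast
          qed
        qed
        have gen: "generate ?Q {a, y} = carrier ?Q"
          unfolding QK using generate_consistent[of "{a, y}" K] aK yK subK genK by simp
        have cardQ: "card (carrier ?Q) = 2 ^ (k + 1)" using carK cK pow by simp
        have finQ: "finite (carrier ?Q)" using carK fin Kc finite_subset by simp
        have aQ: "a \<in> carrier ?Q" and yQ: "y \<in> carrier ?Q" using carK aK yK by simp_all
        have p1: "a [^]\<^bsub>?Q\<^esub> ((2::nat) ^ (k + 1 - 1)) = \<one>\<^bsub>?Q\<^esub>"
          using orda pow_ord_eq_1[OF ac] by (simp add: pow_subgroup_generated)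
        have p2: "y [^]\<^bsub>?Q\<^esub> (2::nat) = a [^]\<^bsub>?Q\<^esub> ((2::nat) ^ (k + 1 - 2))"
        proof -
          obtain c where c: "s = 2 ^ (k - 1) * c" using q by blast
          have "odd c"
          proof
            assume "even c"
            then obtain e where "c = 2 * e" by blast
            then have "s = 2 ^ (k - 1) * 2 * e" using c by simp
            moreover have "(2::int) ^ (k - 1) * 2 = 2 ^ k"
            proof -
              have "k = Suc (k - 1)" using k1 by simp
              then show ?thesis by (metis power_Suc mult.commute)
            qed
            ultimately have "(2::int) ^ k dvd s" by simp
            then show False using q by simp
          qed
          then obtain e where e: "c = 2 * e + 1" by (metis oddE)
          have kk: "(2::int) ^ (k - 1) * 2 = 2 ^ k"
          proof -
            have "k = Suc (k - 1)" using k1 by simp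
            then show ?thesis by (metis power_Suc mult.commute)
          qed
          have "2 ^ (k - 1) - s = (2::int) ^ k * (- e)" using c e kk by (simp add: algebra_simps)
          then have "a [^] s = a [^] ((2::int) ^ (k - 1))" using ordE by simp
          moreover have "a [^] ((2::int) ^ (k - 1)) = a [^] ((2::nat) ^ (k - 1))"
            using int_pow_int[of G a "2 ^ (k - 1)"] by simp
          ultimately have "y \<otimes> y = a [^] ((2::nat) ^ (k - 1))" using s by simp
          then show ?thesis using sq_nat[OF yc] by (simp add: pow_subgroup_generated)
        qed
        have p3: "inv\<^bsub>?Q\<^esub> y \<otimes>\<^bsub>?Q\<^esub> a \<otimes>\<^bsub>?Q\<^esub> y = inv\<^bsub>?Q\<^esub> a"
        proof -
          have "-1 - r = (2::int) ^ k * (- ((1 + r) div 2 ^ k))" using q by (simp add: algebra_simps)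
          then have "a [^] r = a [^] (- 1 :: int)" using ordE by simp
          then have "inv y \<otimes> a \<otimes> y = inv a" using r int_pow_neg[OF ac, of 1] ac by simp
          then show ?thesis using aQ yQ by simp
        qed
        have "gen_quaternion_group ?Q"
          unfolding gen_quaternion_group_def
          apply (intro conjI)
           apply simp
          apply (rule exI[of _ "k + 1"])
          apply (intro conjI)
             apply (use q in simp)
            apply (rule finQ)
           apply (rule cardQ)
          apply (rule bexI[of _ a, OF _ aQ])
          apply (rule bexI[of _ y, OF _ yQ])
          apply (intro conjI)
             apply (rule gen)
            apply (rule p1)
           apply (rule p2)
          apply (rule p3)
          done
        then show False using notcq by simp
      qed
    qed
  qed
qed

end

theorem lemma3p2:
  fixes G :: "('a, 'b) monoid_scheme" and H :: "'a set"
  assumes "group G" and "finite (carrier G)"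
    and "subgroup H G"
    and "H \<noteq> {\<one>\<^bsub>G\<^esub>}"
    and "cyclic_group (subgroup_generated G H)"
    and "\<exists>k::nat. card H = 2 ^ k"
  shows "subgroup_perfect_code G H \<longleftrightarrow>
    \<not> (\<exists>K. subgroup K G \<and> H \<subseteq> K \<and> card K = 2 * card H \<and>
          (cyclic_group (subgroup_generated G K) \<or>
           gen_quaternion_group (subgroup_generated G K)))"
proof -
  interpret hg G H using assms(1,3) by (simp add: hg_def hg_axioms_def)
  obtain k where pow: "card H = 2 ^ k" using assms(6) by blast
  have k1: "k \<ge> 1"
  proof (rule ccontr)
    assume "\<not> k \<ge> 1"
    then have "card H = 1" using pow by simp
    then obtain h where h: "H = {h}" using card_1_singletonE by blast
    then have "H = {\<one>\<^bsub>G\<^esub>}" using H1 by simp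
    then show False using assms(4) by simp
  qed
  show ?thesis
  proof
    assume "subgroup_perfect_code G H"
    then show "\<not> (\<exists>K. subgroup K G \<and> H \<subseteq> K \<and> card K = 2 * card H \<and>
          (cyclic_group (subgroup_generated G K) \<or> gen_quaternion_group (subgroup_generated G K)))"
      by (rule dir1[OF assms(2) pow k1])
  next
    assume noK: "\<not> (\<exists>K. subgroup K G \<and> H \<subseteq> K \<and> card K = 2 * card H \<and>
          (cyclic_group (subgroup_generated G K) \<or> gen_quaternion_group (subgroup_generated G K)))"
    note star = star_lemma[OF assms(2) pow k1 assms(5) noK]
    obtain T where T: "T \<subseteq> carrier G" "\<forall>t\<in>T. inv\<^bsub>G\<^esub> t \<in> T"
      "\<forall>x\<in>carrier G. \<exists>!t. t \<in> T \<and> t \<in> H #>\<^bsub>G\<^esub> x"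
      using transversal[OF assms(2) pow star] by blast
    show "subgroup_perfect_code G H" by (rule pc_from_T[OF T])
  qed
qed

end
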